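(* Let $O$ be a closed orthant of $\mathbb{R}^d$ and let $K\subset O$ be an OU set about the origin with $0<\lambda(K)<\infty$. Then the uniform distribution $W_K$ is an extreme point of the class of OU distributions about the origin on $\mathbb{R}^d$.
   Context: A set $K\subset\mathbb{R}^d$ is OU about $x_0$ if for every $x\in K$ the closed axis-parallel rectangle with opposite vertices $x_0$ and $x$ lies in $K$. A distribution on $\mathbb{R}^d$ is OU about $x_0$ if it lies in the closed (weak topology) convex hull of the uniform distributions on subsets of $\mathbb{R}^d$ that are OU about $x_0$. $\lambda$ is Lebesgue measure. *)

theory Defs
  imports "HOL-Probability.Probability"
begin

definition rect :: "'a::euclidean_space \<Rightarrow> 'a \<Rightarrow> 'a set" where
  "rect a b = {y. \<forall>i\<in>Basis. min (a \<bullet> i) (b \<bullet> i) \<le> y \<bullet> i \<and> y \<bullet> i \<le> max (a \<bullet> i) (b \<bullet> i)}"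

definition OU_set :: "'a::euclidean_space \<Rightarrow> 'a set \<Rightarrow> bool" where
  "OU_set x0 K \<longleftrightarrow> (\<forall>x\<in>K. rect x0 x \<subseteq> K)"

definition closed_orthant :: "'a::euclidean_space set \<Rightarrow> bool" where
  "closed_orthant Q \<longleftrightarrow> (\<exists>s::'a \<Rightarrow> real. (\<forall>i\<in>Basis. s i = 1 \<or> s i = -1) \<and>
      Q = {x. \<forall>i\<in>Basis. 0 \<le> s i * (x \<bullet> i)})"

definition distr_on :: "'a::euclidean_space measure \<Rightarrow> bool" where
  "distr_on \<mu> \<longleftrightarrow> prob_space \<mu> \<and> sets \<mu> = sets borel"

definition unif :: "'a::euclidean_space set \<Rightarrow> 'a measure" where
  "unif K = measure_of UNIV (sets borel)
      (\<lambda>A. emeasure lebesgue (A \<inter> K) / emeasure lebesgue K)"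

definition mixture :: "nat \<Rightarrow> (nat \<Rightarrow> real) \<Rightarrow> (nat \<Rightarrow> 'a::euclidean_space measure) \<Rightarrow> 'a measure" where
  "mixture n c m = measure_of UNIV (sets borel)
      (\<lambda>A. \<Sum>j<n. ennreal (c j) * emeasure (m j) A)"

definition conv_hull_meas :: "'a::euclidean_space measure set \<Rightarrow> 'a measure set" where
  "conv_hull_meas S = {mixture n c m | n c m. n > 0 \<and> (\<forall>j<n. c j \<ge> 0 \<and> m j \<in> S)
      \<and> (\<Sum>j<n. c j) = 1}"

text \<open>Closure in the weak topology on Borel probability measures (the coarsest
  topology making all maps \<mu> \<mapsto> \<integral> f d\<mu>, f bounded continuous, continuous).\<close>
definition weak_closure :: "'a::euclidean_space measure set \<Rightarrow> 'a measure set" where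
  "weak_closure S = {\<mu>. distr_on \<mu> \<and>
      (\<forall>(F::('a \<Rightarrow> real) set) (e::real). finite F \<and> (\<forall>f\<in>F. continuous_on UNIV f \<and> bounded (range f)) \<and> e > 0 \<longrightarrow>
        (\<exists>\<nu>\<in>S. \<forall>f\<in>F. \<bar>(\<integral>x. f x \<partial>\<nu>) - (\<integral>x. f x \<partial>\<mu>)\<bar> < e))}"

definition OU_dists :: "'a::euclidean_space \<Rightarrow> 'a measure set" where
  "OU_dists x0 = weak_closure (conv_hull_meas
      {unif K | K. OU_set x0 K \<and> K \<in> sets lebesgue \<and>
         0 < emeasure lebesgue K \<and> emeasure lebesgue K < \<infinity>})"

definition extreme_meas :: "'a::euclidean_space measure set \<Rightarrow> 'a measure \<Rightarrow> bool" where
  "extreme_meas C \<mu> \<longleftrightarrow> \<mu> \<in> C \<and>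
     (\<forall>\<nu>1 \<nu>2 t. \<nu>1 \<in> C \<and> \<nu>2 \<in> C \<and> 0 < t \<and> t < 1 \<and>
        \<mu> = mixture 2 (\<lambda>j. if j = 0 then t else 1 - t) (\<lambda>j. if j = 0 then \<nu>1 else \<nu>2)
        \<longrightarrow> \<nu>1 = \<mu> \<and> \<nu>2 = \<mu>)"

end

theory Submission
  imports Defs
begin


lemma unif_ca:
  fixes K :: "'a::euclidean_space set"
  assumes K: "K \<in> sets lebesgue"
  shows "countably_additive (sets borel) (\<lambda>A. emeasure lebesgue (A \<inter> K) / emeasure lebesgue K)"
proof (rule countably_additiveI)
  fix A :: "nat \<Rightarrow> 'a set" assume A: "range A \<subseteq> sets borel" "disjoint_family A"
  have "(\<Sum>i. emeasure lebesgue (A i \<inter> K)) = emeasure lebesgue (\<Union>i. A i \<inter> K)"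
    using A K by (intro suminf_emeasure) (auto simp: disjoint_family_on_def)
  then show "(\<Sum>i. emeasure lebesgue (A i \<inter> K) / emeasure lebesgue K) =
      emeasure lebesgue (\<Union> (range A) \<inter> K) / emeasure lebesgue K"
    by (simp add: divide_ennreal_def)
qed

lemma unif_emeasure:
  fixes K :: "'a::euclidean_space set"
  assumes K: "K \<in> sets lebesgue" and A: "A \<in> sets borel"
  shows "emeasure (unif K) A = emeasure lebesgue (A \<inter> K) / emeasure lebesgue K"
  unfolding unif_def
  apply (rule emeasure_measure_of_sigma)
  using sets.sigma_algebra_axioms[of borel] unif_ca[OF K] A
  by (auto simp: positive_def)

lemma sets_unif[simp]: "sets (unif K) = sets borel"
  unfolding unif_def by (metis sets.sets_measure_of_eq space_borel)

lemma space_unif[simp]: "space (unif K) = UNIV"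
  unfolding unif_def by (metis space_borel space_measure_of_conv)

lemma sets_mixture[simp]: "sets (mixture n c m) = sets borel"
  unfolding mixture_def by (metis sets.sets_measure_of_eq space_borel)

lemma space_mixture[simp]: "space (mixture n c m) = UNIV"
  unfolding mixture_def by (metis space_borel space_measure_of_conv)

lemma mixture_emeasure:
  assumes m: "\<And>j. j < n \<Longrightarrow> sets (m j) = sets borel" and A: "A \<in> sets borel"
  shows "emeasure (mixture n c m) A = (\<Sum>j<n. ennreal (c j) * emeasure (m j) A)"
  unfolding mixture_def
proof (rule emeasure_measure_of_sigma)
  show "sigma_algebra UNIV (sets borel)" using sets.sigma_algebra_axioms[of borel] by simp
  show "positive (sets borel) (\<lambda>A. \<Sum>j<n. ennreal (c j) * emeasure (m j) A)"
    by (auto simp: positive_def)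
  show "countably_additive (sets borel) (\<lambda>A. \<Sum>j<n. ennreal (c j) * emeasure (m j) A)"
  proof (rule countably_additiveI)
    fix A :: "nat \<Rightarrow> 'a set" assume A: "range A \<subseteq> sets borel" "disjoint_family A"
    have "(\<Sum>i. \<Sum>j<n. ennreal (c j) * emeasure (m j) (A i)) = (\<Sum>j<n. \<Sum>i. ennreal (c j) * emeasure (m j) (A i))"
      by (rule suminf_sum) simp
    also have "\<dots> = (\<Sum>j<n. ennreal (c j) * emeasure (m j) (\<Union>i. A i))"
    proof (rule sum.cong[OF refl])
      fix j assume "j \<in> {..<n}"
      then have "(\<Sum>i. emeasure (m j) (A i)) = emeasure (m j) (\<Union>i. A i)"
        using A m by (intro suminf_emeasure) auto
      then show "(\<Sum>i. ennreal (c j) * emeasure (m j) (A i)) = ennreal (c j) * emeasure (m j) (\<Union>i. A i)"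
        by simp
    qed
    finally show "(\<Sum>i. \<Sum>j<n. ennreal (c j) * emeasure (m j) (A i)) = (\<Sum>j<n. ennreal (c j) * emeasure (m j) (\<Union> (range A)))" .
  qed
qed (use A in auto)

lemma nn_integral_mixture_gen:
  assumes sM: "sets M = sets borel" and m: "\<And>j. j < n \<Longrightarrow> sets (m j) = sets borel"
    and eq: "\<And>A. A \<in> sets borel \<Longrightarrow> emeasure M A = (\<Sum>j<n. c j * emeasure (m j) A)"
    and f: "f \<in> borel_measurable borel"
  shows "(\<integral>\<^sup>+x. f x \<partial>M) = (\<Sum>j<n. c j * (\<integral>\<^sup>+x. f x \<partial>m j))"
  using f
proof (induct rule: borel_measurable_induct)
  case (cong f g)
  then show ?case by (simp add: fun_eq_iff)
next
  case (set A)
  then show ?case using sM m by (simp add: eq)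
next
  case (mult u c')
  have "(\<integral>\<^sup>+x. c' * u x \<partial>M) = c' * (\<integral>\<^sup>+x. u x \<partial>M)"
    using mult sM by (intro nn_integral_cmult) (simp add: measurable_def)
  moreover have "\<And>j. j < n \<Longrightarrow> (\<integral>\<^sup>+x. c' * u x \<partial>m j) = c' * (\<integral>\<^sup>+x. u x \<partial>m j)"
    using mult m by (intro nn_integral_cmult) (simp add: measurable_def)
  then have "(\<Sum>j<n. c j * (\<integral>\<^sup>+x. c' * u x \<partial>m j)) = (\<Sum>j<n. c j * (c' * (\<integral>\<^sup>+x. u x \<partial>m j)))"
    by (intro sum.cong) auto
  ultimately show ?case using mult
    by (simp add: sum_distrib_left mult.left_commute)
next
  case (add u v)
  have mu: "u \<in> borel_measurable M" "v \<in> borel_measurable M" using add sM by (simp_all add: measurable_def)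
  have "(\<integral>\<^sup>+x. v x + u x \<partial>M) = (\<integral>\<^sup>+x. v x \<partial>M) + (\<integral>\<^sup>+x. u x \<partial>M)"
    using mu by (intro nn_integral_add) auto
  moreover have "\<And>j. j < n \<Longrightarrow> (\<integral>\<^sup>+x. v x + u x \<partial>m j) = (\<integral>\<^sup>+x. v x \<partial>m j) + (\<integral>\<^sup>+x. u x \<partial>m j)"
    using add m by (intro nn_integral_add) (simp_all add: measurable_def)
  then have "(\<Sum>j<n. c j * (\<integral>\<^sup>+x. v x + u x \<partial>m j)) = (\<Sum>j<n. c j * ((\<integral>\<^sup>+x. v x \<partial>m j) + (\<integral>\<^sup>+x. u x \<partial>m j)))"
    by (intro sum.cong) auto
  ultimately show ?case using add
    by (simp add: distrib_left sum.distrib)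
next
  case (seq U)
  have mU: "\<And>i. U i \<in> borel_measurable M" using seq sM by (simp add: measurable_def)
  have fe: "(\<Squnion> range U) = (\<lambda>x. \<Squnion>i. U i x)" by (simp add: fun_eq_iff image_comp)
  have 1: "(\<integral>\<^sup>+x. (\<Squnion>i. U i x) \<partial>M) = (\<Squnion>i. \<integral>\<^sup>+x. U i x \<partial>M)"
    using mU seq by (intro nn_integral_monotone_convergence_SUP) simp_all
  have 2: "\<And>j. j < n \<Longrightarrow> (\<integral>\<^sup>+x. (\<Squnion>i. U i x) \<partial>m j) = (\<Squnion>i. \<integral>\<^sup>+x. U i x \<partial>m j)"
    using seq m by (intro nn_integral_monotone_convergence_SUP) (simp_all add: measurable_def)
  have 3: "(\<Squnion>i. \<Sum>j<n. c j * (\<integral>\<^sup>+x. U i x \<partial>m j)) = (\<Sum>j<n. \<Squnion>i. c j * (\<integral>\<^sup>+x. U i x \<partial>m j))"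
  proof (rule ennreal_SUP_sum)
    fix j show "incseq (\<lambda>i. c j * (\<integral>\<^sup>+x. U i x \<partial>m j))"
      using seq(4) by (auto simp: incseq_def intro!: mult_left_mono nn_integral_mono dest: le_funD)
  qed
  have "(\<integral>\<^sup>+x. (\<Squnion>i. U i x) \<partial>M) = (\<Squnion>i. \<Sum>j<n. c j * (\<integral>\<^sup>+x. U i x \<partial>m j))"
    using 1 seq by simp
  also have "\<dots> = (\<Sum>j<n. c j * (\<integral>\<^sup>+x. (\<Squnion>i. U i x) \<partial>m j))"
    using 3 2 by (simp add: SUP_mult_left_ennreal)
  finally show ?case unfolding fe .
qed


definition orth :: "('a::euclidean_space \<Rightarrow> real) \<Rightarrow> 'a set" where
  "orth s = {x. \<forall>i\<in>Basis. 0 < s i * (x \<bullet> i)}"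

definition outw :: "('a::euclidean_space \<Rightarrow> real) \<Rightarrow> 'a \<Rightarrow> bool" where
  "outw s v \<longleftrightarrow> (\<forall>i\<in>Basis. 0 \<le> s i * (v \<bullet> i))"

definition goodg :: "('a::euclidean_space \<Rightarrow> real) \<Rightarrow> ('a \<Rightarrow> real) \<Rightarrow> bool" where
  "goodg s g \<longleftrightarrow> continuous_on UNIV g \<and> bounded (range g) \<and> (\<forall>x. 0 \<le> g x) \<and> (\<forall>x. x \<notin> orth s \<longrightarrow> g x = 0)"

definition PN :: "('a::euclidean_space \<Rightarrow> real) \<Rightarrow> 'a measure \<Rightarrow> bool" where
  "PN s \<nu> \<longleftrightarrow> (\<forall>g v. goodg s g \<and> outw s v \<longrightarrow>
     (\<integral>\<^sup>+x. ennreal (g (x - v)) \<partial>\<nu>) \<le> (\<integral>\<^sup>+x. ennreal (g x) \<partial>\<nu>))"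

definition PR :: "('a::euclidean_space \<Rightarrow> real) \<Rightarrow> 'a measure \<Rightarrow> bool" where
  "PR s \<nu> \<longleftrightarrow> (\<forall>g v. goodg s g \<and> outw s v \<longrightarrow>
     (\<integral>x. g (x - v) \<partial>\<nu>) \<le> (\<integral>x. g x \<partial>\<nu>))"

lemma OU_step:
  fixes K :: "'a::euclidean_space set"
  assumes "OU_set 0 K" "y \<in> orth s" "outw s v" "v + y \<in> K"
  shows "y \<in> K"
proof -
  have "y \<in> rect 0 (v + y)"
    unfolding rect_def
  proof (safe)
    fix i :: 'a assume i: "i \<in> Basis"
    have a: "0 < s i * (y \<bullet> i)" using assms(2) i by (auto simp: orth_def)
    have b: "0 \<le> s i * (v \<bullet> i)" using assms(3) i by (auto simp: outw_def)
    show "min (0 \<bullet> i) ((v + y) \<bullet> i) \<le> y \<bullet> i" "y \<bullet> i \<le> max (0 \<bullet> i) ((v + y) \<bullet> i)"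
      using a b by (auto simp: inner_add_left zero_less_mult_iff zero_le_mult_iff)
  qed
  then show ?thesis using assms(1,4) by (auto simp: OU_set_def)
qed

lemma borel_leb: "f \<in> borel_measurable borel \<Longrightarrow> f \<in> borel_measurable lebesgue"
  by (rule measurable_completion) simp

lemma sets_borel_leb: "A \<in> sets borel \<Longrightarrow> A \<in> sets lebesgue"
  by (metis sets_completionI_sets sets_lborel)

lemma goodg_meas: "goodg s g \<Longrightarrow> g \<in> borel_measurable borel"
  by (simp add: goodg_def borel_measurable_continuous_onI)

lemma goodg_shift_meas: "goodg s g \<Longrightarrow> (\<lambda>x. g (x - v)) \<in> borel_measurable borel"
  by (rule borel_measurable_continuous_on) (auto simp: goodg_def)

lemma nn_integral_unif:
  fixes K :: "'a::euclidean_space set"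
  assumes K: "K \<in> sets lebesgue" and f: "f \<in> borel_measurable borel"
  shows "(\<integral>\<^sup>+x. f x \<partial>unif K) = inverse (emeasure lebesgue K) * (\<integral>\<^sup>+x. indicator K x * f x \<partial>lebesgue)"
proof -
  let ?M = "density lebesgue (\<lambda>x. inverse (emeasure lebesgue K) * indicator K x)"
  have dm: "(\<lambda>x. inverse (emeasure lebesgue K) * indicator K x :: ennreal) \<in> borel_measurable lebesgue"
    using K by measurable
  have "(\<integral>\<^sup>+x. f x \<partial>unif K) = (\<integral>\<^sup>+x. f x \<partial>?M)"
  proof (rule nn_integral_subalgebra)
    show "f \<in> borel_measurable (unif K)" using f by (simp add: measurable_def)
    show "sets (unif K) \<subseteq> sets ?M" using sets_borel_leb by auto
    show "space (unif K) = space ?M" by simp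
    fix A assume A: "A \<in> sets (unif K)"
    then have Ab: "A \<in> sets borel" by simp
    then have Al: "A \<in> sets lebesgue" by (rule sets_borel_leb)
    have "emeasure ?M A = (\<integral>\<^sup>+x. inverse (emeasure lebesgue K) * indicator K x * indicator A x \<partial>lebesgue)"
      using dm Al by (rule emeasure_density)
    also have "\<dots> = (\<integral>\<^sup>+x. inverse (emeasure lebesgue K) * indicator (A \<inter> K) x \<partial>lebesgue)"
      by (intro nn_integral_cong) (auto split: split_indicator)
    also have "\<dots> = inverse (emeasure lebesgue K) * emeasure lebesgue (A \<inter> K)"
      using Al K by (subst nn_integral_cmult) auto
    finally show "emeasure (unif K) A = emeasure ?M A"
      using unif_emeasure[OF K Ab] by (simp add: divide_ennreal_def mult.commute)
  qed
  also have "\<dots> = (\<integral>\<^sup>+x. inverse (emeasure lebesgue K) * indicator K x * f x \<partial>lebesgue)"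
    using dm f by (subst nn_integral_density) (auto intro: borel_leb)
  also have "\<dots> = inverse (emeasure lebesgue K) * (\<integral>\<^sup>+x. indicator K x * f x \<partial>lebesgue)"
    using K borel_leb[OF f] by (subst nn_integral_cmult[symmetric]) (auto simp: mult.assoc)
  finally show ?thesis .
qed


lemma leb_translate:
  fixes v :: "'a::euclidean_space"
  shows "lebesgue = distr lebesgue lebesgue (\<lambda>x. v + x)" "(\<lambda>x. v + x) \<in> lebesgue \<rightarrow>\<^sub>M lebesgue"
proof -
  have T: "(\<lambda>x. v + (\<Sum>j\<in>Basis. (1 * (x \<bullet> j)) *\<^sub>R j)) = (\<lambda>x. v + x)"
    by (simp add: euclidean_representation)
  show "lebesgue = distr lebesgue lebesgue (\<lambda>x. v + x)"
    using lebesgue_affine_euclidean[of "\<lambda>_. 1" v] unfolding T by (simp add: density_1)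
  show "(\<lambda>x. v + x) \<in> lebesgue \<rightarrow>\<^sub>M lebesgue"
    using lebesgue_affine_measurable[of "\<lambda>_. 1" v] unfolding T by simp
qed

lemma nn_integral_leb_translate:
  fixes v :: "'a::euclidean_space"
  assumes h: "h \<in> borel_measurable lebesgue"
  shows "(\<integral>\<^sup>+x. h x \<partial>lebesgue) = (\<integral>\<^sup>+x. h (v + x) \<partial>lebesgue)"
proof -
  have "(\<integral>\<^sup>+x. h x \<partial>lebesgue) = (\<integral>\<^sup>+x. h x \<partial>distr lebesgue lebesgue (\<lambda>x. v + x))"
    using leb_translate(1)[of v] by simp
  also have "\<dots> = (\<integral>\<^sup>+x. h (v + x) \<partial>lebesgue)"
    using h leb_translate(2)[of v] by (subst nn_integral_distr) auto
  finally show ?thesis .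
qed

lemma PN_unif:
  fixes K :: "'a::euclidean_space set"
  assumes K: "K \<in> sets lebesgue" and OU: "OU_set 0 K"
  shows "PN s (unif K)"
  unfolding PN_def
proof (intro allI impI, elim conjE)
  fix g v assume g: "goodg s g" and v: "outw s v"
  have gm: "(\<lambda>x. ennreal (g x)) \<in> borel_measurable borel" using goodg_meas[OF g] by measurable
  have gm2: "(\<lambda>x. ennreal (g (x - v))) \<in> borel_measurable borel" using goodg_shift_meas[OF g, of v] by measurable
  have h: "(\<lambda>x. indicator K x * ennreal (g (x - v))) \<in> borel_measurable lebesgue"
    using K borel_leb[OF gm2] by measurable
  have "(\<integral>\<^sup>+x. indicator K x * ennreal (g (x - v)) \<partial>lebesgue) = (\<integral>\<^sup>+x. indicator K (v + x) * ennreal (g x) \<partial>lebesgue)"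
    using nn_integral_leb_translate[OF h, of v] by simp
  also have "\<dots> \<le> (\<integral>\<^sup>+x. indicator K x * ennreal (g x) \<partial>lebesgue)"
  proof (rule nn_integral_mono)
    fix x
    show "indicator K (v + x) * ennreal (g x) \<le> indicator K x * ennreal (g x)"
    proof (cases "x \<in> orth s \<and> v + x \<in> K")
      case True then have "x \<in> K" using OU_step[OF OU _ v] by blast
      then show ?thesis by (simp split: split_indicator)
    next
      case False
      then have "x \<notin> orth s \<or> v + x \<notin> K" by blast
      then show ?thesis using g by (auto simp: goodg_def)
    qed
  qed
  finally show "(\<integral>\<^sup>+x. ennreal (g (x - v)) \<partial>unif K) \<le> (\<integral>\<^sup>+x. ennreal (g x) \<partial>unif K)"
    using nn_integral_unif[OF K gm] nn_integral_unif[OF K gm2] by (simp add: mult_left_mono)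
qed

lemma PN_mixture:
  assumes m: "\<And>j. j < n \<Longrightarrow> sets (m j) = sets borel" "\<And>j. j < n \<Longrightarrow> PN s (m j)"
    and c: "\<And>j. j < n \<Longrightarrow> 0 \<le> c j"
  shows "PN s (mixture n c m)"
  unfolding PN_def
proof (intro allI impI, elim conjE)
  fix g v assume g: "goodg s g" and v: "outw s v"
  have gm: "(\<lambda>x. ennreal (g x)) \<in> borel_measurable borel" using goodg_meas[OF g] by measurable
  have gm2: "(\<lambda>x. ennreal (g (x - v))) \<in> borel_measurable borel" using goodg_shift_meas[OF g, of v] by measurable
  have eq: "\<And>A. A \<in> sets borel \<Longrightarrow> emeasure (mixture n c m) A = (\<Sum>j<n. ennreal (c j) * emeasure (m j) A)"
    using mixture_emeasure m by blast
  have "(\<integral>\<^sup>+x. ennreal (g (x - v)) \<partial>mixture n c m) = (\<Sum>j<n. ennreal (c j) * (\<integral>\<^sup>+x. ennreal (g (x - v)) \<partial>m j))"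
    by (rule nn_integral_mixture_gen[OF _ m(1) eq gm2]) auto
  also have "\<dots> \<le> (\<Sum>j<n. ennreal (c j) * (\<integral>\<^sup>+x. ennreal (g x) \<partial>m j))"
    using m(2) g v by (intro sum_mono mult_left_mono) (auto simp: PN_def)
  also have "\<dots> = (\<integral>\<^sup>+x. ennreal (g x) \<partial>mixture n c m)"
    by (rule nn_integral_mixture_gen[OF _ m(1) eq gm, symmetric]) auto
  finally show "(\<integral>\<^sup>+x. ennreal (g (x - v)) \<partial>mixture n c m) \<le> (\<integral>\<^sup>+x. ennreal (g x) \<partial>mixture n c m)" .
qed


lemma goodg_shift: "goodg s g \<Longrightarrow> continuous_on UNIV (\<lambda>x. g (x - v)) \<and> bounded (range (\<lambda>x. g (x - v)))"
proof -
  assume g: "goodg s g"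
  have "range (\<lambda>x. g (x - v)) \<subseteq> range g" by auto
  moreover have "continuous_on UNIV (\<lambda>x. g (x - v))"
    using g unfolding goodg_def
    by (intro continuous_on_compose2[of UNIV g UNIV "\<lambda>x. x - v"]) (auto intro!: continuous_intros)
  ultimately show ?thesis using g bounded_subset unfolding goodg_def by blast
qed

lemma goodg_bound: "goodg s g \<Longrightarrow> \<exists>B. \<forall>x. 0 \<le> g x \<and> g x \<le> B"
  unfolding goodg_def bounded_iff by (metis abs_le_D1 real_norm_def rangeI)

lemma PN_to_PR:
  assumes P: "prob_space \<nu>" "sets \<nu> = sets borel" "PN s \<nu>"
  shows "PR s \<nu>"
  unfolding PR_def
proof (intro allI impI, elim conjE)
  fix g v assume g: "goodg s g" and v: "outw s v"
  interpret prob_space \<nu> by (rule P(1))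
  have gm: "g \<in> borel_measurable \<nu>" using goodg_meas[OF g] P(2) by (simp add: measurable_def)
  have gm2: "(\<lambda>x. g (x - v)) \<in> borel_measurable \<nu>" using goodg_shift_meas[OF g, of v] P(2) by (simp add: measurable_def)
  obtain B where B: "\<And>x. 0 \<le> g x \<and> g x \<le> B" using goodg_bound[OF g] by blast
  have fin: "(\<integral>\<^sup>+x. ennreal (g x) \<partial>\<nu>) < \<infinity>"
  proof -
    have "(\<integral>\<^sup>+x. ennreal (g x) \<partial>\<nu>) \<le> (\<integral>\<^sup>+x. ennreal B \<partial>\<nu>)"
      using B by (intro nn_integral_mono) (auto intro: ennreal_leI)
    also have "\<dots> = ennreal B" by (simp add: emeasure_space_1)
    finally show ?thesis by (simp add: order_le_less_trans)
  qed
  have "(\<integral>x. g (x - v) \<partial>\<nu>) = enn2real (\<integral>\<^sup>+x. ennreal (g (x - v)) \<partial>\<nu>)"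
    using gm2 B by (intro integral_eq_nn_integral) auto
  also have "\<dots> \<le> enn2real (\<integral>\<^sup>+x. ennreal (g x) \<partial>\<nu>)"
    using P(3) g v fin by (intro enn2real_mono) (auto simp: PN_def)
  also have "\<dots> = (\<integral>x. g x \<partial>\<nu>)"
    using gm B by (intro integral_eq_nn_integral[symmetric]) auto
  finally show "(\<integral>x. g (x - v) \<partial>\<nu>) \<le> (\<integral>x. g x \<partial>\<nu>)" .
qed

definition OUS :: "'a::euclidean_space measure set" where
  "OUS = {unif K | K. OU_set 0 K \<and> K \<in> sets lebesgue \<and> 0 < emeasure lebesgue K \<and> emeasure lebesgue K < \<infinity>}"

lemma unif_prob:
  assumes K: "K \<in> sets lebesgue" "0 < emeasure lebesgue K" "emeasure lebesgue K < \<infinity>"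
  shows "prob_space (unif K)"
proof
  have "emeasure (unif K) UNIV = emeasure lebesgue K / emeasure lebesgue K"
    using unif_emeasure[OF K(1), of UNIV] by simp
  also have "\<dots> = 1" using K by (simp add: divide_eq_1_ennreal)
  finally show "emeasure (unif K) (space (unif K)) = 1" by simp
qed

lemma hull_props:
  assumes "\<nu> \<in> conv_hull_meas OUS"
  shows "prob_space \<nu> \<and> sets \<nu> = sets borel \<and> PN s \<nu>"
proof -
  obtain n c m where nu: "\<nu> = mixture n c m" and n: "n > 0" and cm: "\<And>j. j < n \<Longrightarrow> c j \<ge> 0 \<and> m j \<in> OUS"
    and c1: "(\<Sum>j<n. c j) = 1"
    using assms unfolding conv_hull_meas_def by blast
  have mj: "\<And>j. j < n \<Longrightarrow> prob_space (m j) \<and> sets (m j) = sets borel \<and> PN s (m j)"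
  proof -
    fix j assume "j < n"
    then obtain K where "m j = unif K" "OU_set 0 K" "K \<in> sets lebesgue" "0 < emeasure lebesgue K" "emeasure lebesgue K < \<infinity>"
      using cm unfolding OUS_def by blast
    then show "prob_space (m j) \<and> sets (m j) = sets borel \<and> PN s (m j)"
      using unif_prob PN_unif by auto
  qed
  have "PN s \<nu>" unfolding nu using mj cm by (intro PN_mixture) auto
  moreover have "prob_space \<nu>"
  proof
    have "emeasure \<nu> (space \<nu>) = (\<Sum>j<n. ennreal (c j) * emeasure (m j) UNIV)"
      unfolding nu using mj by (subst mixture_emeasure) auto
    also have "\<dots> = (\<Sum>j<n. ennreal (c j))"
    proof (rule sum.cong[OF refl])
      fix j assume "j \<in> {..<n}"
      then have "prob_space (m j)" "sets (m j) = sets borel" using mj by auto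
      moreover then have "space (m j) = UNIV" using sets_eq_imp_space_eq by force
      ultimately show "ennreal (c j) * emeasure (m j) UNIV = ennreal (c j)"
        by (metis mult.right_neutral prob_space.emeasure_space_1)
    qed
    also have "\<dots> = ennreal (\<Sum>j<n. c j)" using cm by (intro sum_ennreal) auto
    finally show "emeasure \<nu> (space \<nu>) = 1" using c1 by simp
  qed
  ultimately show ?thesis unfolding nu by simp
qed

lemma OU_dists_eq: "OU_dists 0 = weak_closure (conv_hull_meas OUS)"
  unfolding OU_dists_def OUS_def by simp

lemma arith_contra: "(b'::real) \<le> a' \<Longrightarrow> a' - a < (b - a) / 2 \<Longrightarrow> - (b' - b) < (b - a) / 2 \<Longrightarrow> False"
  by argo

lemma closure_PR:
  assumes mu: "\<mu> \<in> OU_dists 0"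
  shows "PR s \<mu>"
  unfolding PR_def
proof (intro allI impI, elim conjE)
  fix g v assume g: "goodg s g" and v: "outw s v"
  have mu': "\<mu> \<in> weak_closure (conv_hull_meas OUS)" using mu unfolding OU_dists_def OUS_def by simp
  note W = mu'[unfolded weak_closure_def mem_Collect_eq, THEN conjunct2]
  show "(\<integral>x. g (x - v) \<partial>\<mu>) \<le> (\<integral>x. g x \<partial>\<mu>)"
  proof (rule ccontr)
    assume "\<not> ?thesis"
    then have e: "(\<integral>x. g (x - v) \<partial>\<mu>) - (\<integral>x. g x \<partial>\<mu>) > 0" by simp
    have FF: "\<forall>f\<in>{g, \<lambda>x. g (x - v)}. continuous_on UNIV f \<and> bounded (range f)"
      using g goodg_shift[OF g, of v] unfolding goodg_def by blast
    obtain \<nu> where nu: "\<nu> \<in> conv_hull_meas OUS"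
      and cl: "\<forall>f\<in>{g, \<lambda>x. g (x - v)}. \<bar>(\<integral>x. f x \<partial>\<nu>) - (\<integral>x. f x \<partial>\<mu>)\<bar> < ((\<integral>x. g (x - v) \<partial>\<mu>) - (\<integral>x. g x \<partial>\<mu>)) / 2"
      using W[rule_format, of "{g, \<lambda>x. g (x - v)}", OF conjI[OF _ conjI[OF FF half_gt_zero[OF e]]]] by blast
    have c1: "\<bar>(\<integral>x. g x \<partial>\<nu>) - (\<integral>x. g x \<partial>\<mu>)\<bar> < ((\<integral>x. g (x - v) \<partial>\<mu>) - (\<integral>x. g x \<partial>\<mu>)) / 2"
      using cl by blast
    have c2: "\<bar>(\<integral>x. g (x - v) \<partial>\<nu>) - (\<integral>x. g (x - v) \<partial>\<mu>)\<bar> < ((\<integral>x. g (x - v) \<partial>\<mu>) - (\<integral>x. g x \<partial>\<mu>)) / 2"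
      using cl by blast
    have "PR s \<nu>" using hull_props[OF nu] PN_to_PR by blast
    then have "(\<integral>x. g (x - v) \<partial>\<nu>) \<le> (\<integral>x. g x \<partial>\<nu>)" using g v by (auto simp: PR_def)
    moreover note c1[unfolded abs_less_iff] c2[unfolded abs_less_iff]
    ultimately show False by (elim conjE) (rule arith_contra)
  qed
qed


lemma zero_notin_orth: "(0::'a::euclidean_space) \<notin> orth s"
proof -
  obtain i :: 'a where "i \<in> Basis" using nonempty_Basis by blast
  then show ?thesis by (auto simp: orth_def)
qed

lemma PR_set:
  fixes B :: "'a::euclidean_space set"
  assumes P: "prob_space \<nu>" "sets \<nu> = sets borel" "PR s \<nu>" and B: "open B" "B \<subseteq> orth s" and v: "outw s v"
  shows "measure \<nu> ((+) v ` B) \<le> measure \<nu> B"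
proof -
  interpret prob_space \<nu> by (rule P(1))
  have sp: "space \<nu> = UNIV" using P(2) sets_eq_imp_space_eq by force
  have ne: "- B \<noteq> {}" using B zero_notin_orth[of s] by auto
  have cl: "closed (- B)" using B by (simp add: closed_Compl)
  define g where "g n x = min 1 (real n * infdist x (- B))" for n :: nat and x
  have g01: "0 \<le> g n x \<and> g n x \<le> 1" for n x
    unfolding g_def by (auto simp: infdist_nonneg)
  have gg: "goodg s (g n)" for n
    unfolding goodg_def
  proof (intro conjI allI impI)
    show "continuous_on UNIV (g n)" unfolding g_def by (intro continuous_intros)
    show "bounded (range (g n))" unfolding bounded_iff using g01 by (intro exI[of _ 1]) auto
    show "0 \<le> g n x" for x using g01 by simp
    show "g n x = 0" if "x \<notin> orth s" for x
    proof -
      have "x \<in> - B" using that B by auto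
      then show ?thesis by (simp add: g_def)
    qed
  qed
  have lim: "(\<lambda>n. g n x) \<longlonglongrightarrow> indicator B x" for x
  proof (cases "x \<in> B")
    case True
    then have d: "infdist x (- B) > 0" using infdist_pos_not_in_closed[OF cl ne] by simp
    obtain N :: nat where N: "1 / infdist x (- B) < real N" using reals_Archimedean2 by blast
    have "eventually (\<lambda>n. g n x = 1) sequentially"
    proof (rule eventually_sequentiallyI[of N])
      fix n assume "N \<le> n"
      then have "1 / infdist x (- B) < real n" using N by (meson le_less_trans not_le of_nat_le_iff order.strict_trans1)
      then have "1 < real n * infdist x (- B)" using d by (simp add: field_simps)
      then show "g n x = 1" by (simp add: g_def)
    qed
    then show ?thesis using True by (simp add: tendsto_eventually)
  next
    case False then show ?thesis by (simp add: g_def)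
  qed
  have gm: "\<And>n. g n \<in> borel_measurable \<nu>" using goodg_meas[OF gg] P(2) by (simp add: measurable_def)
  have gm2: "\<And>n. (\<lambda>x. g n (x - v)) \<in> borel_measurable \<nu>" using goodg_shift_meas[OF gg] P(2) by (simp add: measurable_def)
  have Bm: "B \<in> sets \<nu>" using B P(2) by simp
  have Bvm: "(+) v ` B \<in> sets \<nu>" using B P(2) open_translation by (simp add: open_translation)
  have L1: "(\<lambda>n. \<integral>x. g n x \<partial>\<nu>) \<longlonglongrightarrow> (\<integral>x. indicator B x \<partial>\<nu>)"
    by (rule integral_dominated_convergence[where w="\<lambda>_. 1"])
       (use gm Bm lim g01 in auto)
  have ind: "indicator B (x - v) = (indicator ((+) v ` B) x :: real)" for x
    by (auto simp: indicator_def image_iff)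
  have lim2: "(\<lambda>n. g n (x - v)) \<longlonglongrightarrow> indicator ((+) v ` B) x" for x
    using lim[of "x - v"] ind[of x] by simp
  have L2: "(\<lambda>n. \<integral>x. g n (x - v) \<partial>\<nu>) \<longlonglongrightarrow> (\<integral>x. indicator ((+) v ` B) x \<partial>\<nu>)"
    by (rule integral_dominated_convergence[where w="\<lambda>_. 1"])
       (use gm2 Bvm lim2 g01 in auto)
  have "(\<integral>x. (indicator ((+) v ` B) x :: real) \<partial>\<nu>) \<le> (\<integral>x. (indicator B x :: real) \<partial>\<nu>)"
    by (rule LIMSEQ_le[OF L2 L1]) (use P(3) gg v in \<open>auto simp: PR_def\<close>)
  then show ?thesis using sp by simp
qed


lemma small_all_zero:
  fixes a c :: real
  assumes "\<And>n::nat. n \<ge> 1 \<Longrightarrow> \<bar>a\<bar> \<le> c / real n"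
  shows "a = 0"
proof (rule ccontr)
  assume a: "a \<noteq> 0"
  obtain n :: nat where n: "c / \<bar>a\<bar> < real n" using reals_Archimedean2 by blast
  have c: "c \<ge> \<bar>a\<bar>" using assms[of 1] by simp
  then have "n \<ge> 1" using n a
    by (metis abs_ge_zero divide_nonneg_nonneg le_less_trans less_one not_le of_nat_0 of_nat_less_iff order.strict_trans2)
  then have "\<bar>a\<bar> \<le> c / real n" using assms by blast
  then have "\<bar>a\<bar> * real n \<le> c" using \<open>n \<ge> 1\<close> by (simp add: field_simps)
  moreover have "c < real n * \<bar>a\<bar>" using n a by (simp add: field_simps)
  ultimately show False by (simp add: mult.commute)
qed

lemma cauchy_mono:
  fixes \<phi> :: "real \<Rightarrow> real" and L :: real
  assumes L: "0 < L" and nn: "\<And>x. 0 < x \<Longrightarrow> x \<le> L \<Longrightarrow> 0 \<le> \<phi> x"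
    and add: "\<And>x y. 0 < x \<Longrightarrow> 0 < y \<Longrightarrow> x + y \<le> L \<Longrightarrow> \<phi> (x + y) = \<phi> x + \<phi> y"
    and x: "0 < x" "x \<le> L"
  shows "\<phi> x = x / L * \<phi> L"
proof -
  have mono: "\<phi> a \<le> \<phi> b" if "0 < a" "a \<le> b" "b \<le> L" for a b
  proof (cases "a = b")
    case False
    then have "\<phi> b = \<phi> a + \<phi> (b - a)" using add[of a "b - a"] that by simp
    moreover have "0 \<le> \<phi> (b - a)" using nn[of "b - a"] that False by simp
    ultimately show ?thesis by simp
  qed simp
  have mult: "\<phi> (real k * (L / real n)) = real k * \<phi> (L / real n)" if "1 \<le> k" "k \<le> n" for k n :: nat
    using that
  proof (induction k)
    case 0 then show ?case by simp
  next
    case (Suc k)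
    show ?case
    proof (cases "k = 0")
      case True then show ?thesis by simp
    next
      case False
      have n: "real n > 0" using Suc by simp
      have "real (Suc k) * (L / real n) = real k * (L / real n) + L / real n"
        by (simp add: ring_distribs add_divide_distrib)
      then have "\<phi> (real (Suc k) * (L / real n)) = \<phi> (real k * (L / real n) + L / real n)"
        by simp
      also have "\<dots> = \<phi> (real k * (L / real n)) + \<phi> (L / real n)"
      proof (rule add)
        show "0 < real k * (L / real n)" using False n L by simp
        show "0 < L / real n" using n L by simp
        have "real k * (L / real n) + L / real n = real (Suc k) * L / real n" using n by (simp add: field_simps)
        also have "\<dots> \<le> real n * L / real n" using Suc L n by (intro divide_right_mono mult_right_mono) auto
        finally show "real k * (L / real n) + L / real n \<le> L" using n by simp
      qed
      also have "\<dots> = real (Suc k) * \<phi> (L / real n)" using Suc False by (simp add: algebra_simps)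
      finally show ?thesis .
    qed
  qed
  have unit: "\<phi> (L / real n) = \<phi> L / real n" if "1 \<le> n" for n :: nat
    using mult[of n n] that by (simp add: field_simps)
  have "\<phi> x - x / L * \<phi> L = 0"
  proof (rule small_all_zero[where c = "\<phi> L"])
    fix n :: nat assume n1: "n \<ge> 1"
    have n: "real n > 0" using n1 by simp
    define k where "k = nat \<lfloor>real n * x / L\<rfloor>"
    have kfl: "real k = of_int \<lfloor>real n * x / L\<rfloor>" unfolding k_def using n x L by simp
    have k1: "real k \<le> real n * x / L" using kfl by simp
    have k2: "real n * x / L < real k + 1" using kfl by linarith
    have kn: "k \<le> n"
    proof -
      have "real n * x / L \<le> real n" using x L n by (simp add: field_simps)
      then show ?thesis using k1 by linarith
    qed
    have kL: "real k * (L / real n) \<le> x" using k1 n L by (simp add: field_simps)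
    have kL2: "x < (real k + 1) * (L / real n)" using k2 n L by (simp add: field_simps)
    have lower: "real k * (\<phi> L / real n) \<le> \<phi> x"
    proof (cases "k = 0")
      case True then show ?thesis using nn x by simp
    next
      case False
      then have "\<phi> (real k * (L / real n)) \<le> \<phi> x"
        using kL x n L by (intro mono) auto
      then show ?thesis using mult[of k n] unit[OF n1] False kn by simp
    qed
    have upper: "\<phi> x \<le> (real k + 1) * (\<phi> L / real n)"
    proof (cases "Suc k \<le> n")
      case True
      have s1: "real (Suc k) * (L / real n) \<le> real n * (L / real n)"
        using True L n by (intro mult_right_mono) auto
      then have s2: "real (Suc k) * (L / real n) \<le> L" using n by simp
      have "\<phi> x \<le> \<phi> (real (Suc k) * (L / real n))"
        using kL2 x s2 by (intro mono) (auto simp: add.commute)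
      then show ?thesis using mult[of "Suc k" n] unit[OF n1] True by (simp add: add.commute)
    next
      case False
      then have "real n \<le> real k + 1" by simp
      then have "1 \<le> (real k + 1) / real n" using n by simp
      moreover have "\<phi> x \<le> \<phi> L" using x by (intro mono) auto
      moreover have "0 \<le> \<phi> L" using nn L by simp
      ultimately have "\<phi> x \<le> (real k + 1) / real n * \<phi> L"
        using mult_right_mono[of 1 "(real k + 1) / real n" "\<phi> L"] by linarith
      then show ?thesis by simp
    qed
    have p0: "0 \<le> \<phi> L" using nn L by simp
    have l2: "real k * (\<phi> L / real n) \<le> x / L * \<phi> L"
    proof -
      have "real k / real n \<le> x / L" using k1 n L by (simp add: field_simps)
      then show ?thesis using p0 by (metis mult_right_mono times_divide_eq_left times_divide_eq_right mult.commute)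
    qed
    have u2: "x / L * \<phi> L \<le> (real k + 1) * (\<phi> L / real n)"
    proof -
      have "x / L \<le> (real k + 1) / real n" using k2 n L by (simp add: field_simps)
      then show ?thesis using p0 by (metis mult_right_mono times_divide_eq_left times_divide_eq_right mult.commute)
    qed
    have "(real k + 1) * (\<phi> L / real n) - real k * (\<phi> L / real n) = \<phi> L / real n"
      by (simp add: algebra_simps add_divide_distrib)
    then show "\<bar>\<phi> x - x / L * \<phi> L\<bar> \<le> \<phi> L / real n"
      using lower upper l2 u2 by linarith
  qed
  then show ?thesis by simp
qed


definition upd1 :: "'a::euclidean_space \<Rightarrow> 'a \<Rightarrow> real \<Rightarrow> 'a" where
  "upd1 h i t = h + (t - h \<bullet> i) *\<^sub>R i"

lemma upd1_inner: "i \<in> Basis \<Longrightarrow> j \<in> Basis \<Longrightarrow> upd1 h i t \<bullet> j = (if j = i then t else h \<bullet> j)"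
  by (auto simp: upd1_def inner_add_left inner_Basis)

lemma upd1_upd1: "i \<in> Basis \<Longrightarrow> upd1 (upd1 h i s) i t = upd1 h i t"
  by (rule euclidean_eqI) (simp add: upd1_inner)

lemma upd1_same: "i \<in> Basis \<Longrightarrow> upd1 h i (h \<bullet> i) = h"
  by (rule euclidean_eqI) (simp add: upd1_inner)

lemma box_sub_lr:
  fixes a b l r :: "'a::euclidean_space"
  assumes "\<forall>i\<in>Basis. a \<bullet> i < b \<bullet> i"
  shows "box a b \<subseteq> box l r \<longleftrightarrow> (\<forall>i\<in>Basis. l \<bullet> i \<le> a \<bullet> i \<and> b \<bullet> i \<le> r \<bullet> i)"
  using assms subset_box(4) by blast

locale corebox =
  fixes \<nu> :: "'a::euclidean_space measure" and l r :: 'a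
  assumes fin: "finite_measure \<nu>" and sets: "sets \<nu> = sets borel"
    and lr: "\<forall>i\<in>Basis. l \<bullet> i < r \<bullet> i"
    and hyp: "\<And>i c. i \<in> Basis \<Longrightarrow> measure \<nu> {x. x \<bullet> i = c} = 0"
    and inv: "\<And>a b w. \<forall>i\<in>Basis. a \<bullet> i < b \<bullet> i \<Longrightarrow> box a b \<subseteq> box l r \<Longrightarrow>
       box (a + w) (b + w) \<subseteq> box l r \<Longrightarrow> measure \<nu> (box a b) = measure \<nu> (box (a + w) (b + w))"
begin

definition "D = r - l"
definition "F h = measure \<nu> (box l (l + h))"
definition "V h \<longleftrightarrow> (\<forall>j\<in>Basis. 0 < h \<bullet> j \<and> h \<bullet> j \<le> D \<bullet> j)"

lemma boxF:
  assumes ab: "\<forall>i\<in>Basis. a \<bullet> i < b \<bullet> i" and sub: "box a b \<subseteq> box l r"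
  shows "measure \<nu> (box a b) = F (b - a)"
proof -
  have c: "\<forall>i\<in>Basis. l \<bullet> i \<le> a \<bullet> i \<and> b \<bullet> i \<le> r \<bullet> i" using box_sub_lr[OF ab] sub by blast
  have e1: "a + (l - a) = l" "b + (l - a) = l + (b - a)" by (simp_all add: algebra_simps)
  have "box (a + (l - a)) (b + (l - a)) \<subseteq> box l r"
    unfolding e1 using c ab by (subst box_sub_lr) (auto simp: inner_simps)
  from inv[OF ab sub this] show ?thesis unfolding e1 F_def .
qed

lemma V_sub: "V h \<Longrightarrow> box l (l + h) \<subseteq> box l r"
  by (subst box_sub_lr) (auto simp: V_def D_def inner_simps)

lemma F_nonneg: "0 \<le> F h"
  by (simp add: F_def)

lemma F_add:
  assumes h: "V h" and i: "i \<in> Basis" and x: "0 < x" and y: "0 < y" and xy: "x + y = h \<bullet> i"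
  shows "F h = F (upd1 h i x) + F (upd1 h i y)"
proof -
  interpret finite_measure \<nu> by (rule fin)
  define big where "big = box l (l + h)"
  define A1 where "A1 = box l (l + upd1 h i x)"
  define A2 where "A2 = box (l + x *\<^sub>R i) (l + h)"
  define Hp where "Hp = {z. z \<bullet> i = l \<bullet> i + x}"
  have hpos: "\<forall>j\<in>Basis. 0 < h \<bullet> j" using h by (auto simp: V_def)
  have mem_big: "z \<in> big \<longleftrightarrow> (\<forall>j\<in>Basis. l \<bullet> j < z \<bullet> j \<and> z \<bullet> j < l \<bullet> j + h \<bullet> j)" for z
    by (simp add: big_def mem_box inner_simps)
  have mem_A1: "z \<in> A1 \<longleftrightarrow> (\<forall>j\<in>Basis. l \<bullet> j < z \<bullet> j \<and> z \<bullet> j < l \<bullet> j + (if j = i then x else h \<bullet> j))" for z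
    by (simp add: A1_def mem_box inner_simps upd1_inner i)
  have mem_A2: "z \<in> A2 \<longleftrightarrow> (\<forall>j\<in>Basis. l \<bullet> j + (if i = j then x else 0) < z \<bullet> j \<and> z \<bullet> j < l \<bullet> j + h \<bullet> j)" for z
    by (simp add: A2_def mem_box inner_simps inner_Basis i)
  have disj: "A1 \<inter> A2 = {}"
  proof (safe)
    fix z assume "z \<in> A1" "z \<in> A2"
    then show "z \<in> {}" using i by (auto simp: mem_A1 mem_A2 dest!: bspec[of _ _ i])
  qed
  have sub1: "A1 \<union> A2 \<subseteq> big"
  proof
    fix z assume "z \<in> A1 \<union> A2"
    then show "z \<in> big"
    proof
      assume "z \<in> A1"
      then show ?thesis unfolding mem_big mem_A1 using xy y by (smt (verit, best))
    next
      assume "z \<in> A2"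
      then show ?thesis unfolding mem_big mem_A2 using xy x by (smt (verit, best))
    qed
  qed
  have sub2: "big \<subseteq> (A1 \<union> A2) \<union> Hp"
  proof
    fix z assume z: "z \<in> big"
    show "z \<in> (A1 \<union> A2) \<union> Hp"
    proof (cases "z \<bullet> i < l \<bullet> i + x")
      case True
      then have "z \<in> A1" using z xy y unfolding mem_big mem_A1 by (smt (verit, best))
      then show ?thesis by simp
    next
      case False
      show ?thesis
      proof (cases "z \<bullet> i = l \<bullet> i + x")
        case True then show ?thesis by (simp add: Hp_def)
      next
        case False2: False
        then have "z \<in> A2" using z False x unfolding mem_big mem_A2 by (smt (verit, best))
        then show ?thesis by simp
      qed
    qed
  qed
  have m: "A1 \<in> sets \<nu>" "A2 \<in> sets \<nu>" "big \<in> sets \<nu>" "Hp \<in> sets \<nu>"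
    using sets i by (auto simp: A1_def A2_def big_def Hp_def)
  have "measure \<nu> (A1 \<union> A2) = measure \<nu> A1 + measure \<nu> A2"
    using disj m by (intro finite_measure_Union) auto
  moreover have "measure \<nu> (A1 \<union> A2) \<le> measure \<nu> big"
    using sub1 m by (intro finite_measure_mono) auto
  moreover have "measure \<nu> big \<le> measure \<nu> ((A1 \<union> A2) \<union> Hp)"
    using sub2 m by (intro finite_measure_mono) auto
  moreover have "measure \<nu> ((A1 \<union> A2) \<union> Hp) \<le> measure \<nu> (A1 \<union> A2) + measure \<nu> Hp"
    using m by (intro measure_Un_le) auto
  moreover have "measure \<nu> Hp = 0" unfolding Hp_def using hyp[OF i] .
  ultimately have eq: "measure \<nu> big = measure \<nu> A1 + measure \<nu> A2" by linarith
  have "measure \<nu> A2 = F ((l + h) - (l + x *\<^sub>R i))"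
  proof (unfold A2_def, rule boxF)
    show ab: "\<forall>j\<in>Basis. (l + x *\<^sub>R i) \<bullet> j < (l + h) \<bullet> j"
      using hpos x y xy i by (auto simp: inner_simps inner_Basis)
    show "box (l + x *\<^sub>R i) (l + h) \<subseteq> box l r"
      using ab h x i by (subst box_sub_lr) (auto simp: inner_simps inner_Basis V_def D_def)
  qed
  also have "(l + h) - (l + x *\<^sub>R i) = upd1 h i y"
    by (rule euclidean_eqI) (use i xy in \<open>auto simp: upd1_inner inner_simps inner_Basis\<close>)
  finally have "measure \<nu> A2 = F (upd1 h i y)" .
  then show ?thesis using eq by (simp add: F_def big_def A1_def)
qed


definition "updS S h = (\<Sum>j\<in>Basis. (if j \<in> S then D \<bullet> j else h \<bullet> j) *\<^sub>R j)"

lemma updS_inner: "j \<in> Basis \<Longrightarrow> updS S h \<bullet> j = (if j \<in> S then D \<bullet> j else h \<bullet> j)"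
  by (simp add: updS_def inner_sum_left_Basis)

lemma V_D: "V D"
  using lr by (auto simp: V_def D_def inner_simps)

lemma V_updS: "V h \<Longrightarrow> V (updS S h)"
  using V_D by (auto simp: V_def updS_inner)

lemma V_upd1: "V h \<Longrightarrow> i \<in> Basis \<Longrightarrow> 0 < t \<Longrightarrow> t \<le> D \<bullet> i \<Longrightarrow> V (upd1 h i t)"
  by (auto simp: V_def upd1_inner)

lemma F_prod_S:
  assumes "finite S" 
  shows "S \<subseteq> Basis \<longrightarrow> (\<forall>h. V h \<longrightarrow> F h = (\<Prod>i\<in>S. (h \<bullet> i) / (D \<bullet> i)) * F (updS S h))"
  using assms
proof (induction S rule: finite_induct)
  case empty
  have "updS {} h = h" for h by (rule euclidean_eqI) (simp add: updS_inner)
  then show ?case by simp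
next
  case (insert i S)
  show ?case
  proof (intro impI allI)
    fix h assume sub: "insert i S \<subseteq> Basis" and h: "V h"
    have i: "i \<in> Basis" using sub by auto
    define h' where "h' = updS S h"
    have h': "V h'" unfolding h'_def by (rule V_updS[OF h])
    have Di: "0 < D \<bullet> i" using V_D i by (auto simp: V_def)
    have hi: "0 < h \<bullet> i" "h \<bullet> i \<le> D \<bullet> i" using h i by (auto simp: V_def)
    have "F (upd1 h' i (h \<bullet> i)) = (h \<bullet> i) / (D \<bullet> i) * F (upd1 h' i (D \<bullet> i))"
    proof (rule cauchy_mono[where \<phi> = "\<lambda>t. F (upd1 h' i t)"])
      show "0 < D \<bullet> i" by (rule Di)
      show "0 \<le> F (upd1 h' i x)" for x by (rule F_nonneg)
      show "F (upd1 h' i (x + y)) = F (upd1 h' i x) + F (upd1 h' i y)"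
        if "0 < x" "0 < y" "x + y \<le> D \<bullet> i" for x y
      proof -
        have V2: "V (upd1 h' i (x + y))" using V_upd1[OF h' i, of "x + y"] that by simp
        have "F (upd1 h' i (x + y)) = F (upd1 (upd1 h' i (x + y)) i x) + F (upd1 (upd1 h' i (x + y)) i y)"
          using F_add[OF V2 i that(1,2)] i by (simp add: upd1_inner)
        then show ?thesis using i by (simp add: upd1_upd1)
      qed
    qed (use hi in auto)
    moreover have "upd1 h' i (h \<bullet> i) = h'"
    proof -
      have "h' \<bullet> i = h \<bullet> i" using insert(2) i by (simp add: h'_def updS_inner)
      then show ?thesis using upd1_same[OF i, of h'] by simp
    qed
    moreover have "upd1 h' i (D \<bullet> i) = updS (insert i S) h"
      by (rule euclidean_eqI) (use i in \<open>auto simp: upd1_inner updS_inner h'_def\<close>)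
    moreover have "F h = (\<Prod>i\<in>S. (h \<bullet> i) / (D \<bullet> i)) * F h'"
      using insert(3) sub h unfolding h'_def by blast
    ultimately show "F h = (\<Prod>j\<in>insert i S. (h \<bullet> j) / (D \<bullet> j)) * F (updS (insert i S) h)"
      using insert(1,2) by (simp add: mult_ac)
  qed
qed

lemma F_prod: "V h \<Longrightarrow> F h = (\<Prod>i\<in>Basis. (h \<bullet> i) / (D \<bullet> i)) * F D"
proof -
  assume h: "V h"
  have "updS Basis h = D" by (rule euclidean_eqI) (simp add: updS_inner)
  then show ?thesis using F_prod_S[of Basis] h by simp
qed

definition "\<alpha> = F D / (\<Prod>i\<in>Basis. D \<bullet> i)"

lemma alpha_nonneg: "0 \<le> \<alpha>"
proof -
  have "0 \<le> (\<Prod>i\<in>Basis. D \<bullet> i)" using V_D by (intro prod_nonneg) (auto simp: V_def less_imp_le)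
  then show ?thesis unfolding \<alpha>_def using F_nonneg by simp
qed

lemma box_formula:
  assumes ab: "\<forall>i\<in>Basis. a \<bullet> i < b \<bullet> i" and sub: "box a b \<subseteq> box l r"
  shows "measure \<nu> (box a b) = \<alpha> * (\<Prod>i\<in>Basis. (b - a) \<bullet> i)"
proof -
  have c: "\<forall>i\<in>Basis. l \<bullet> i \<le> a \<bullet> i \<and> b \<bullet> i \<le> r \<bullet> i" using box_sub_lr[OF ab] sub by blast
  have V: "V (b - a)" using ab c by (auto simp: V_def D_def inner_simps)
  have "measure \<nu> (box a b) = (\<Prod>i\<in>Basis. ((b - a) \<bullet> i) / (D \<bullet> i)) * F D"
    using boxF[OF ab sub] F_prod[OF V] by simp
  also have "\<dots> = \<alpha> * (\<Prod>i\<in>Basis. (b - a) \<bullet> i)"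
    by (simp add: \<alpha>_def prod_dividef)
  finally show ?thesis .
qed

end

lemma emeasure_density_ind:
  assumes "R \<in> sets M" "X \<in> sets M"
  shows "emeasure (density M (\<lambda>x. c * indicator R x)) X = c * emeasure M (X \<inter> R)"
proof -
  have "emeasure (density M (\<lambda>x. c * indicator R x)) X = (\<integral>\<^sup>+x. c * indicator R x * indicator X x \<partial>M)"
    using assms by (intro emeasure_density) auto
  also have "\<dots> = (\<integral>\<^sup>+x. c * indicator (X \<inter> R) x \<partial>M)"
    by (intro nn_integral_cong) (auto split: split_indicator)
  also have "\<dots> = c * emeasure M (X \<inter> R)"
    using assms by (subst nn_integral_cmult) auto
  finally show ?thesis .
qed

context corebox
begin

lemma uniq:
  assumes X: "X \<in> sets borel"
  shows "measure \<nu> (X \<inter> box l r) = \<alpha> * measure lborel (X \<inter> box l r)"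
proof -
  interpret finite_measure \<nu> by (rule fin)
  let ?R = "box l r"
  let ?M1 = "density \<nu> (\<lambda>x. 1 * indicator ?R x)"
  let ?M2 = "density lborel (\<lambda>x. ennreal \<alpha> * indicator ?R x)"
  have e1: "emeasure ?M1 Y = emeasure \<nu> (Y \<inter> ?R)" if "Y \<in> sets borel" for Y
    using emeasure_density_ind[of ?R \<nu> Y 1] that sets by simp
  have e2: "emeasure ?M2 Y = ennreal \<alpha> * emeasure lborel (Y \<inter> ?R)" if "Y \<in> sets borel" for Y
    using emeasure_density_ind[of ?R lborel Y] that by simp
  have "?M1 = ?M2"
  proof (rule measure_eqI_generator_eq[where E = "range (\<lambda>(a, b). box a b)" and \<Omega> = UNIV
        and A = "\<lambda>n. box (- (real n *\<^sub>R One)) (real n *\<^sub>R One)"])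
    show "Int_stable (range (\<lambda>(a, b). box a b :: 'a set))"
      by (auto simp: Int_stable_def box_Int_box)
    show "range (\<lambda>(a, b). box a b) \<subseteq> Pow (UNIV :: 'a set)" by simp
    show "sets ?M1 = sigma_sets UNIV (range (\<lambda>(a, b). box a b))"
      using sets by (simp add: borel_eq_box)
    show "sets ?M2 = sigma_sets UNIV (range (\<lambda>(a, b). box a b))"
      by (simp add: borel_eq_box)
    show "range (\<lambda>n. box (- (real n *\<^sub>R One)) (real n *\<^sub>R One)) \<subseteq> range (\<lambda>(a, b). box a b :: 'a set)"
      by auto
    show "(\<Union>n. box (- (real n *\<^sub>R One)) (real n *\<^sub>R One)) = (UNIV :: 'a set)"
      by (rule UN_box_eq_UNIV)
    show "emeasure ?M1 (box (- (real n *\<^sub>R One)) (real n *\<^sub>R One)) \<noteq> \<infinity>" for n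
      by (subst e1) (auto simp: emeasure_eq_measure)
    fix Y assume "Y \<in> range (\<lambda>(a, b). box a b :: 'a set)"
    then obtain a b where Y: "Y = box a b" by auto
    define c :: 'a where "c = (\<Sum>i\<in>Basis. max (a\<bullet>i) (l\<bullet>i) *\<^sub>R i)"
    define d :: 'a where "d = (\<Sum>i\<in>Basis. min (b\<bullet>i) (r\<bullet>i) *\<^sub>R i)"
    have YR: "Y \<inter> ?R = box c d" unfolding Y c_def d_def by (rule box_Int_box)
    show "emeasure ?M1 Y = emeasure ?M2 Y"
    proof (cases "\<forall>i\<in>Basis. c \<bullet> i < d \<bullet> i")
      case True
      have sub: "box c d \<subseteq> ?R" using YR by auto
      let ?P = "(\<Prod>i\<in>Basis. (d - c) \<bullet> i)"
      have P0: "0 \<le> ?P" using True by (intro prod_nonneg) (auto simp: inner_simps)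
      have "emeasure ?M1 Y = emeasure \<nu> (box c d)" using e1 Y YR by simp
      also have "\<dots> = ennreal (measure \<nu> (box c d))" by (rule emeasure_eq_measure)
      also have "\<dots> = ennreal (\<alpha> * ?P)" using box_formula[OF True sub] by simp
      also have "\<dots> = ennreal \<alpha> * ennreal ?P" using alpha_nonneg P0 by (rule ennreal_mult)
      also have "ennreal ?P = emeasure lborel (box c d)"
        using True by (subst emeasure_lborel_box) (auto simp: less_imp_le prod_ennreal inner_simps)
      also have "ennreal \<alpha> * \<dots> = emeasure ?M2 Y" using e2 Y YR by simp
      finally show ?thesis .
    next
      case False
      then have "box c d = {}" by (auto simp: box_eq_empty not_less)
      then show ?thesis using Y e1 e2 YR by simp
    qed
  qed
  then have "emeasure \<nu> (X \<inter> ?R) = ennreal \<alpha> * emeasure lborel (X \<inter> ?R)"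
    using e1[OF X] e2[OF X] by simp
  moreover have "emeasure lborel (X \<inter> ?R) = ennreal (measure lborel (X \<inter> ?R))"
  proof -
    have "emeasure lborel (X \<inter> ?R) \<le> emeasure lborel ?R" using X by (intro emeasure_mono) auto
    then have "emeasure lborel (X \<inter> ?R) < \<infinity>" using emeasure_lborel_box_finite[of l r] by simp
    then show ?thesis by (simp add: emeasure_eq_ennreal_measure less_top)
  qed
  ultimately show ?thesis using alpha_nonneg
    by (simp add: emeasure_eq_measure ennreal_mult[symmetric] measure_nonneg)
qed

end


lemma box_transl: "(\<lambda>x. v + x) ` box a b = box (v + a) (v + (b::'a::euclidean_space))"
proof (rule set_eqI)
  fix y
  show "y \<in> (\<lambda>x. v + x) ` box a b \<longleftrightarrow> y \<in> box (v + a) (v + b)"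
  proof
    assume "y \<in> (\<lambda>x. v + x) ` box a b"
    then show "y \<in> box (v + a) (v + b)" by (auto simp: mem_box inner_simps)
  next
    assume y: "y \<in> box (v + a) (v + b)"
    have "y - v \<in> box a b" using y by (auto simp: mem_box inner_simps)
    then show "y \<in> (\<lambda>x. v + x) ` box a b" by (intro image_eqI[of _ _ "y - v"]) auto
  qed
qed

lemma box_transl': "(+) v ` box a b = box (v + a) (v + (b::'a::euclidean_space))"
  using box_transl[of v a b] by (simp cong: image_cong_simp)

locale ext =
  fixes s :: "'a::euclidean_space \<Rightarrow> real" and K :: "'a set" and \<nu>1 \<nu>2 :: "'a measure" and t :: real
  assumes s: "\<forall>i\<in>Basis. s i = 1 \<or> s i = -1"
    and KQ: "\<forall>x\<in>K. \<forall>i\<in>Basis. 0 \<le> s i * (x \<bullet> i)"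
    and OU: "OU_set 0 K" and Kl: "K \<in> sets lebesgue"
    and Kpos: "0 < emeasure lebesgue K" and Kfin: "emeasure lebesgue K < \<infinity>"
    and p1: "prob_space \<nu>1" "sets \<nu>1 = sets borel" "PR s \<nu>1"
    and p2: "prob_space \<nu>2" "sets \<nu>2 = sets borel" "PR s \<nu>2"
    and t: "0 < t" "t < 1"
    and mix: "\<forall>A\<in>sets borel. emeasure (unif K) A = ennreal t * emeasure \<nu>1 A + ennreal (1 - t) * emeasure \<nu>2 A"
begin

definition "cK = measure lebesgue K"

lemma cK_pos: "0 < cK" and eK: "emeasure lebesgue K = ennreal cK"
proof -
  show e: "emeasure lebesgue K = ennreal cK" unfolding cK_def using Kfin by (simp add: emeasure_eq_ennreal_measure less_top)
  show "0 < cK" using Kpos e by simp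
qed

lemma mu_prob: "prob_space (unif K)"
  using unif_prob Kl Kpos Kfin by blast

lemma leb_fin: "emeasure lebesgue (A \<inter> K) = ennreal (measure lebesgue (A \<inter> K))" if "A \<in> sets lebesgue"
proof -
  have "emeasure lebesgue (A \<inter> K) \<le> emeasure lebesgue K" using that Kl by (intro emeasure_mono) auto
  then have "emeasure lebesgue (A \<inter> K) < \<infinity>" using Kfin by (rule le_less_trans)
  then show ?thesis by (intro emeasure_eq_ennreal_measure) simp
qed

lemma mu_real: "A \<in> sets borel \<Longrightarrow> measure (unif K) A = measure lebesgue (A \<inter> K) / cK"
proof -
  assume A: "A \<in> sets borel"
  have "emeasure (unif K) A = ennreal (measure lebesgue (A \<inter> K)) / ennreal cK"
    using unif_emeasure[OF Kl A] leb_fin[OF sets_borel_leb[OF A]] eK by simp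
  also have "\<dots> = ennreal (measure lebesgue (A \<inter> K) / cK)"
    using cK_pos by (simp add: divide_ennreal)
  finally show ?thesis using cK_pos by (intro measure_eq_emeasure_eq_ennreal) auto
qed

lemma mix_real: "A \<in> sets borel \<Longrightarrow> measure (unif K) A = t * measure \<nu>1 A + (1 - t) * measure \<nu>2 A"
proof -
  assume A: "A \<in> sets borel"
  interpret P1: prob_space \<nu>1 by (rule p1(1))
  interpret P2: prob_space \<nu>2 by (rule p2(1))
  have "emeasure (unif K) A = ennreal t * ennreal (measure \<nu>1 A) + ennreal (1 - t) * ennreal (measure \<nu>2 A)"
    using mix A by (simp add: P1.emeasure_eq_measure P2.emeasure_eq_measure)
  also have "\<dots> = ennreal (t * measure \<nu>1 A + (1 - t) * measure \<nu>2 A)"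
    using t by (simp add: ennreal_mult ennreal_plus[symmetric])
  finally show ?thesis using t by (intro measure_eq_emeasure_eq_ennreal) auto
qed

lemma OU_in_K: "x \<in> rect 0 p \<Longrightarrow> p \<in> K \<Longrightarrow> x \<in> K"
  using OU by (auto simp: OU_set_def)

lemma inv_both:
  assumes B: "open B" "B \<subseteq> orth s" and v: "outw s v" and BK: "(+) v ` B \<subseteq> K"
  shows "measure \<nu>1 ((+) v ` B) = measure \<nu>1 B \<and> measure \<nu>2 ((+) v ` B) = measure \<nu>2 B"
proof -
  have a1: "measure \<nu>1 ((+) v ` B) \<le> measure \<nu>1 B" using PR_set[OF p1 B v] .
  have a2: "measure \<nu>2 ((+) v ` B) \<le> measure \<nu>2 B" using PR_set[OF p2 B v] .
  have Bb: "B \<in> sets borel" using B by simp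
  have "open ((+) v ` B)" by (rule open_translation[OF B(1)])
  then have Bvb: "(+) v ` B \<in> sets borel" by simp
  have BinK: "B \<subseteq> K"
  proof
    fix y assume y: "y \<in> B"
    then have "v + y \<in> K" using BK by auto
    then show "y \<in> K" using OU_step[OF OU _ v] y B by auto
  qed
  have "measure lebesgue ((+) v ` B \<inter> K) = measure lebesgue ((+) v ` B)" using BK by (simp add: Int_absorb2)
  also have "\<dots> = measure lebesgue B" by (rule measure_translation)
  also have "\<dots> = measure lebesgue (B \<inter> K)" using BinK by (simp add: Int_absorb2)
  finally have "measure (unif K) ((+) v ` B) = measure (unif K) B"
    using mu_real[OF Bb] mu_real[OF Bvb] by simp
  then have "t * measure \<nu>1 ((+) v ` B) + (1 - t) * measure \<nu>2 ((+) v ` B) = t * measure \<nu>1 B + (1 - t) * measure \<nu>2 B"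
    using mix_real[OF Bb] mix_real[OF Bvb] by simp
  moreover have "t * measure \<nu>1 ((+) v ` B) \<le> t * measure \<nu>1 B" using a1 t by simp
  moreover have "(1 - t) * measure \<nu>2 ((+) v ` B) \<le> (1 - t) * measure \<nu>2 B" using a2 t by simp
  ultimately have "t * measure \<nu>1 ((+) v ` B) = t * measure \<nu>1 B" "(1 - t) * measure \<nu>2 ((+) v ` B) = (1 - t) * measure \<nu>2 B"
    by linarith+
  then show ?thesis using t by simp
qed

definition lo :: "'a \<Rightarrow> 'a" where "lo p = (\<Sum>i\<in>Basis. min 0 (p \<bullet> i) *\<^sub>R i)"
definition hi :: "'a \<Rightarrow> 'a" where "hi p = (\<Sum>i\<in>Basis. max 0 (p \<bullet> i) *\<^sub>R i)"
definition RR :: "'a \<Rightarrow> 'a set" where "RR p = box (lo p) (hi p)"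

lemma lo_inner: "i \<in> Basis \<Longrightarrow> lo p \<bullet> i = min 0 (p \<bullet> i)"
  by (simp add: lo_def inner_sum_left_Basis)
lemma hi_inner: "i \<in> Basis \<Longrightarrow> hi p \<bullet> i = max 0 (p \<bullet> i)"
  by (simp add: hi_def inner_sum_left_Basis)

lemma orth_ne0: "p \<in> orth s \<Longrightarrow> i \<in> Basis \<Longrightarrow> p \<bullet> i \<noteq> 0"
  by (auto simp: orth_def)

lemma lo_hi: "p \<in> orth s \<Longrightarrow> \<forall>i\<in>Basis. lo p \<bullet> i < hi p \<bullet> i"
  using orth_ne0 by (force simp: lo_inner hi_inner)

lemma RR_orth: "p \<in> orth s \<Longrightarrow> RR p \<subseteq> orth s"
proof
  fix z assume p: "p \<in> orth s" and z: "z \<in> RR p"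
  show "z \<in> orth s" unfolding orth_def
  proof (safe)
    fix i :: 'a assume i: "i \<in> Basis"
    have zi: "min 0 (p \<bullet> i) < z \<bullet> i" "z \<bullet> i < max 0 (p \<bullet> i)"
      using z i by (auto simp: RR_def mem_box lo_inner hi_inner)
    have pi: "0 < s i * (p \<bullet> i)" using p i by (auto simp: orth_def)
    show "0 < s i * (z \<bullet> i)"
      using s i zi pi by (cases "s i = 1") (auto simp: zero_less_mult_iff)
  qed
qed

lemma RR_K: "p \<in> K \<Longrightarrow> RR p \<subseteq> K"
proof
  fix z assume p: "p \<in> K" and z: "z \<in> RR p"
  have "z \<in> rect 0 p" using z unfolding rect_def RR_def
    by (auto simp: mem_box lo_inner hi_inner less_imp_le)
  then show "z \<in> K" using OU_in_K p by blast
qed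

lemma RR_open: "open (RR p)" unfolding RR_def by (rule open_box)

end


context ext begin

lemma hyper_null:
  assumes i: "i \<in> Basis" and nu: "\<nu> = \<nu>1 \<or> \<nu> = \<nu>2"
  shows "measure \<nu> {x. x \<bullet> i = c} = 0"
proof -
  let ?H = "{x. x \<bullet> i = c}"
  have Hb: "?H \<in> sets borel" using i by simp
  have "negligible ?H" using i by (rule negligible_standard_hyperplane)
  then have "?H \<in> null_sets lebesgue" by (simp add: negligible_iff_null_sets)
  then have "measure lebesgue (?H \<inter> K) = 0"
    using Kl by (metis Int_commute null_set_Int2 measure_eq_0_null_sets)
  then have m0: "measure (unif K) ?H = 0" using mu_real[OF Hb] by simp
  have n1: "0 \<le> measure \<nu>1 ?H" "0 \<le> measure \<nu>2 ?H" by simp_all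
  have "t * measure \<nu>1 ?H + (1 - t) * measure \<nu>2 ?H = 0" using mix_real[OF Hb] m0 by simp
  then have "t * measure \<nu>1 ?H = 0" "(1 - t) * measure \<nu>2 ?H = 0"
    using n1 t by (smt (verit) mult_nonneg_nonneg)+
  then show ?thesis using nu t by auto
qed

lemma shift_inv:
  assumes p: "p \<in> K" "p \<in> orth s" and nu: "\<nu> = \<nu>1 \<or> \<nu> = \<nu>2"
    and ab: "\<forall>i\<in>Basis. a \<bullet> i < b \<bullet> i" and sub1: "box a b \<subseteq> RR p" and sub2: "box (a + w) (b + w) \<subseteq> RR p"
  shows "measure \<nu> (box a b) = measure \<nu> (box (a + w) (b + w))"
proof -
  define u :: 'a where "u = (\<Sum>i\<in>Basis. (if s i * (w \<bullet> i) \<le> 0 then w \<bullet> i else 0) *\<^sub>R i)"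
  have ui: "u \<bullet> i = (if s i * (w \<bullet> i) \<le> 0 then w \<bullet> i else 0)" if "i \<in> Basis" for i
    using that by (simp add: u_def inner_sum_left_Basis)
  have ab2: "\<forall>i\<in>Basis. (a + w) \<bullet> i < (b + w) \<bullet> i" using ab by (simp add: inner_simps)
  have c1: "\<forall>i\<in>Basis. lo p \<bullet> i \<le> a \<bullet> i \<and> b \<bullet> i \<le> hi p \<bullet> i"
    using box_sub_lr[OF ab] sub1 by (simp add: RR_def)
  have c2: "\<forall>i\<in>Basis. lo p \<bullet> i \<le> (a + w) \<bullet> i \<and> (b + w) \<bullet> i \<le> hi p \<bullet> i"
    using box_sub_lr[OF ab2] sub2 by (simp add: RR_def)
  define C where "C = box (a + u) (b + u)"
  have abu: "\<forall>i\<in>Basis. (a + u) \<bullet> i < (b + u) \<bullet> i" using ab by (simp add: inner_simps)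
  have CR: "C \<subseteq> RR p"
    unfolding C_def RR_def using c1 c2 by (subst box_sub_lr[OF abu]) (auto simp: inner_simps ui)
  have Co: "open C" "C \<subseteq> orth s" using CR RR_orth[OF p(2)] by (auto simp: C_def)
  have RK: "RR p \<subseteq> K" by (rule RR_K[OF p(1)])
  have o1: "outw s (- u)" using s by (auto simp: outw_def inner_simps ui)
  have o2: "outw s (w - u)" using s by (auto simp: outw_def inner_simps ui)
  have i1: "(+) (- u) ` C = box a b" unfolding C_def box_transl' by (simp add: algebra_simps)
  have i2: "(+) (w - u) ` C = box (a + w) (b + w)" unfolding C_def box_transl' by (simp add: algebra_simps)
  have "measure \<nu> ((+) (- u) ` C) = measure \<nu> C"
    using inv_both[OF Co o1] i1 sub1 RK nu by auto
  moreover have "measure \<nu> ((+) (w - u) ` C) = measure \<nu> C"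
    using inv_both[OF Co o2] i2 sub2 RK nu by auto
  ultimately show ?thesis using i1 i2 by simp
qed

lemma core_apply:
  assumes p: "p \<in> K" "p \<in> orth s" and nu: "\<nu> = \<nu>1 \<or> \<nu> = \<nu>2"
  shows "\<exists>\<alpha>\<ge>0. \<forall>X\<in>sets borel. measure \<nu> (X \<inter> RR p) = \<alpha> * measure lborel (X \<inter> RR p)"
proof -
  have "corebox \<nu> (lo p) (hi p)"
  proof (rule corebox.intro)
    show "finite_measure \<nu>" using nu p1(1) p2(1) by (auto simp: prob_space_def)
    show "sets \<nu> = sets borel" using nu p1(2) p2(2) by auto
    show "\<forall>i\<in>Basis. lo p \<bullet> i < hi p \<bullet> i" by (rule lo_hi[OF p(2)])
    show "measure \<nu> {x. x \<bullet> i = c} = 0" if "i \<in> Basis" for i c using hyper_null[OF that nu] .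
    show "measure \<nu> (box a b) = measure \<nu> (box (a + w) (b + w))"
      if "\<forall>i\<in>Basis. a \<bullet> i < b \<bullet> i" "box a b \<subseteq> box (lo p) (hi p)" "box (a + w) (b + w) \<subseteq> box (lo p) (hi p)" for a b w
      using shift_inv[OF p nu that(1)] that(2,3) by (simp add: RR_def)
  qed
  then show ?thesis unfolding RR_def using corebox.uniq corebox.alpha_nonneg by blast
qed

end


lemma ss_aux: "(s::real) = 1 \<or> s = -1 \<Longrightarrow> 0 < s * p \<Longrightarrow> 0 < s * q \<Longrightarrow> (0 < p \<and> 0 < q) \<or> (p < 0 \<and> q < 0)"
  by (auto simp: zero_less_mult_iff)

context ext begin

definition "P0 = K \<inter> orth s"

definition alpha :: "'a measure \<Rightarrow> 'a \<Rightarrow> real" where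
  "alpha \<nu> p = (SOME \<alpha>. \<alpha> \<ge> 0 \<and> (\<forall>X\<in>sets borel. measure \<nu> (X \<inter> RR p) = \<alpha> * measure lborel (X \<inter> RR p)))"

lemma alpha_prop:
  assumes p: "p \<in> P0" and nu: "\<nu> = \<nu>1 \<or> \<nu> = \<nu>2"
  shows "alpha \<nu> p \<ge> 0 \<and> (\<forall>X\<in>sets borel. measure \<nu> (X \<inter> RR p) = alpha \<nu> p * measure lborel (X \<inter> RR p))"
proof -
  have pp: "p \<in> K" "p \<in> orth s" using p by (auto simp: P0_def)
  have ex: "\<exists>\<alpha>. \<alpha> \<ge> 0 \<and> (\<forall>X\<in>sets borel. measure \<nu> (X \<inter> RR p) = \<alpha> * measure lborel (X \<inter> RR p))"
    using core_apply[OF pp nu] by blast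
  show ?thesis unfolding alpha_def by (rule someI_ex[OF ex])
qed

lemma RR_pos: "p \<in> orth s \<Longrightarrow> 0 < measure lborel (RR p)"
proof -
  assume p: "p \<in> orth s"
  have "measure lborel (RR p) = (\<Prod>i\<in>Basis. (hi p - lo p) \<bullet> i)"
    using lo_hi[OF p] by (simp add: RR_def measure_lborel_box_eq less_imp_le)
  also have "\<dots> > 0" using lo_hi[OF p] by (intro prod_pos) (auto simp: inner_simps)
  finally show ?thesis .
qed

definition mn :: "'a \<Rightarrow> 'a \<Rightarrow> 'a" where
  "mn p q = (\<Sum>i\<in>Basis. (if \<bar>p \<bullet> i\<bar> \<le> \<bar>q \<bullet> i\<bar> then p \<bullet> i else q \<bullet> i) *\<^sub>R i)"

lemma mn_inner: "i \<in> Basis \<Longrightarrow> mn p q \<bullet> i = (if \<bar>p \<bullet> i\<bar> \<le> \<bar>q \<bullet> i\<bar> then p \<bullet> i else q \<bullet> i)"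
  by (simp add: mn_def inner_sum_left_Basis)

lemma same_sign: "p \<in> orth s \<Longrightarrow> q \<in> orth s \<Longrightarrow> i \<in> Basis \<Longrightarrow> (0 < p \<bullet> i \<and> 0 < q \<bullet> i) \<or> (p \<bullet> i < 0 \<and> q \<bullet> i < 0)"
proof -
  assume a: "p \<in> orth s" "q \<in> orth s" "i \<in> Basis"
  then have "0 < s i * (p \<bullet> i)" "0 < s i * (q \<bullet> i)" by (auto simp: orth_def)
  moreover have "s i = 1 \<or> s i = -1" using s a by blast
  ultimately show ?thesis by (rule ss_aux[rotated])
qed

lemma between_aux: "(0 < (a::real) \<and> 0 < b) \<or> (a < 0 \<and> b < 0) \<Longrightarrow>
   min 0 a \<le> (if \<bar>a\<bar> \<le> \<bar>b\<bar> then a else b) \<and> (if \<bar>a\<bar> \<le> \<bar>b\<bar> then a else b) \<le> max 0 a"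
  by (cases "\<bar>a\<bar> \<le> \<bar>b\<bar>") (auto simp: abs_if)

lemma between_aux2: "(0 < (a::real) \<and> 0 < b) \<or> (a < 0 \<and> b < 0) \<Longrightarrow>
   min 0 a \<le> min 0 (if \<bar>a\<bar> \<le> \<bar>b\<bar> then a else b) \<and> max 0 (if \<bar>a\<bar> \<le> \<bar>b\<bar> then a else b) \<le> max 0 a \<and>
   min 0 b \<le> min 0 (if \<bar>a\<bar> \<le> \<bar>b\<bar> then a else b) \<and> max 0 (if \<bar>a\<bar> \<le> \<bar>b\<bar> then a else b) \<le> max 0 b"
  by (cases "\<bar>a\<bar> \<le> \<bar>b\<bar>") (auto simp: abs_if)

lemma mn_props:
  assumes p: "p \<in> P0" and q: "q \<in> P0"
  shows "mn p q \<in> P0" "RR (mn p q) \<subseteq> RR p" "RR (mn p q) \<subseteq> RR q"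
proof -
  have po: "p \<in> orth s" and qo: "q \<in> orth s" and pK: "p \<in> K" using p q by (auto simp: P0_def)
  have mo: "mn p q \<in> orth s" using po qo by (auto simp: orth_def mn_inner)
  have "mn p q \<in> rect 0 p"
    unfolding rect_def using same_sign[OF po qo] between_aux by (simp add: mn_inner)
  then have "mn p q \<in> K" using OU_in_K pK by blast
  then show "mn p q \<in> P0" using mo by (simp add: P0_def)
  have ab: "\<forall>i\<in>Basis. lo (mn p q) \<bullet> i < hi (mn p q) \<bullet> i" by (rule lo_hi[OF mo])
  show "RR (mn p q) \<subseteq> RR p"
    unfolding RR_def using same_sign[OF po qo] between_aux2
    by (subst box_sub_lr[OF ab]) (simp add: lo_inner hi_inner mn_inner)
  show "RR (mn p q) \<subseteq> RR q"
    unfolding RR_def using same_sign[OF po qo] between_aux2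
    by (subst box_sub_lr[OF ab]) (simp add: lo_inner hi_inner mn_inner)
qed

lemma alpha_const:
  assumes p: "p \<in> P0" and q: "q \<in> P0" and nu: "\<nu> = \<nu>1 \<or> \<nu> = \<nu>2"
  shows "alpha \<nu> p = alpha \<nu> q"
proof -
  let ?m = "mn p q"
  have mP: "?m \<in> P0" and s1: "RR ?m \<subseteq> RR p" and s2: "RR ?m \<subseteq> RR q" using mn_props[OF p q] by auto
  have Rb: "RR ?m \<in> sets borel" using RR_open by simp
  have i1: "RR ?m \<inter> RR p = RR ?m" and i2: "RR ?m \<inter> RR q = RR ?m" using s1 s2 by blast+
  have "measure \<nu> (RR ?m \<inter> RR p) = alpha \<nu> p * measure lborel (RR ?m \<inter> RR p)"
    using alpha_prop[OF p nu] Rb by blast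
  then have A1: "measure \<nu> (RR ?m) = alpha \<nu> p * measure lborel (RR ?m)" unfolding i1 .
  have "measure \<nu> (RR ?m \<inter> RR q) = alpha \<nu> q * measure lborel (RR ?m \<inter> RR q)"
    using alpha_prop[OF q nu] Rb by blast
  then have A2: "measure \<nu> (RR ?m) = alpha \<nu> q * measure lborel (RR ?m)" unfolding i2 .
  note A1 A2
  moreover have "0 < measure lborel (RR ?m)" using RR_pos mP by (auto simp: P0_def)
  ultimately show ?thesis by simp
qed

definition "U = \<Union> (RR ` P0)"

lemma U_open: "open U" unfolding U_def using RR_open by blast

lemma U_K: "U \<subseteq> K" unfolding U_def P0_def using RR_K by blast

lemma U_formula:
  assumes p0: "p0 \<in> P0" and nu: "\<nu> = \<nu>1 \<or> \<nu> = \<nu>2" and X: "X \<in> sets borel"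
  shows "emeasure \<nu> (X \<inter> U) = ennreal (alpha \<nu> p0) * emeasure lborel (X \<inter> U)"
proof -
  have sets_nu: "sets \<nu> = sets borel" using nu p1 p2 by auto
  interpret prob_space \<nu> using nu p1 p2 by auto
  have "\<And>S. S \<in> RR ` P0 \<Longrightarrow> open S" using RR_open by blast
  then obtain F' where F': "F' \<subseteq> RR ` P0" "countable F'" "\<Union>F' = \<Union>(RR ` P0)"
    by (rule Lindelof)
  have "RR p0 \<noteq> {}" using RR_pos[of p0] p0 by (auto simp: P0_def)
  then have "\<Union>(RR ` P0) \<noteq> {}" using p0 by blast
  then have Fne: "F' \<noteq> {}" using F'(3) by auto
  define A where "A n = from_nat_into F' n" for n
  have rA: "range A = F'" unfolding A_def using range_from_nat_into[OF Fne F'(2)] .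
  have AP: "\<exists>p\<in>P0. A n = RR p" for n using rA F'(1) by blast
  have UA: "U = (\<Union>n. A n)" unfolding U_def using rA F'(3) by simp
  have Ab: "A n \<in> sets borel" for n using AP[of n] RR_open by auto
  define Dn where "Dn n = X \<inter> disjointed A n" for n
  have Db: "Dn n \<in> sets borel" for n
    unfolding Dn_def using X Ab sets.range_disjointed_sets[of A borel] by auto
  have Ddisj: "disjoint_family Dn" unfolding Dn_def using disjoint_family_disjointed[of A]
    by (auto simp: disjoint_family_on_def)
  have DU: "(\<Union>n. Dn n) = X \<inter> U" unfolding Dn_def UA using UN_disjointed_eq[of A] by auto
  have piece: "emeasure \<nu> (Dn n) = ennreal (alpha \<nu> p0) * emeasure lborel (Dn n)" for n
  proof -
    obtain p where p: "p \<in> P0" "A n = RR p" using AP by blast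
    have sub: "Dn n \<subseteq> RR p" unfolding Dn_def using disjointed_subset[of A n] p by auto
    have i1: "Dn n \<inter> RR p = Dn n" using sub by blast
    have "measure \<nu> (Dn n \<inter> RR p) = alpha \<nu> p * measure lborel (Dn n \<inter> RR p)"
      using alpha_prop[OF p(1) nu] Db[of n] by blast
    then have m1: "measure \<nu> (Dn n) = alpha \<nu> p * measure lborel (Dn n)" unfolding i1 .
    have ap: "alpha \<nu> p = alpha \<nu> p0" by (rule alpha_const[OF p(1) p0 nu])
    have a0: "0 \<le> alpha \<nu> p0" using alpha_prop[OF p0 nu] by blast
    have el: "emeasure lborel (Dn n) = ennreal (measure lborel (Dn n))"
    proof -
      have "emeasure lborel (Dn n) \<le> emeasure lborel (RR p)" using sub Db RR_open by (intro emeasure_mono) auto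
      also have "\<dots> < \<infinity>" unfolding RR_def by (rule emeasure_lborel_box_finite)
      finally show ?thesis by (intro emeasure_eq_ennreal_measure) simp
    qed
    have "emeasure \<nu> (Dn n) = ennreal (measure \<nu> (Dn n))" by (rule emeasure_eq_measure)
    also have "\<dots> = ennreal (alpha \<nu> p0 * measure lborel (Dn n))" using m1 ap by simp
    also have "\<dots> = ennreal (alpha \<nu> p0) * ennreal (measure lborel (Dn n))"
      using a0 by (intro ennreal_mult) simp_all
    also have "\<dots> = ennreal (alpha \<nu> p0) * emeasure lborel (Dn n)" using el by simp
    finally show ?thesis .
  qed
  have "emeasure \<nu> (X \<inter> U) = (\<Sum>n. emeasure \<nu> (Dn n))"
    unfolding DU[symmetric] using Db Ddisj sets_nu by (intro suminf_emeasure[symmetric]) auto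
  also have "\<dots> = (\<Sum>n. ennreal (alpha \<nu> p0) * emeasure lborel (Dn n))" using piece by simp
  also have "\<dots> = ennreal (alpha \<nu> p0) * (\<Sum>n. emeasure lborel (Dn n))" by simp
  also have "(\<Sum>n. emeasure lborel (Dn n)) = emeasure lborel (X \<inter> U)"
    unfolding DU[symmetric] using Db Ddisj by (intro suminf_emeasure) auto
  finally show ?thesis .
qed

end


lemma ennreal_archi:
  fixes x C :: ennreal
  assumes le: "\<And>n::nat. of_nat n * x \<le> C" and C: "C < \<top>"
  shows "x = 0"
proof -
  have "x \<le> C" using le[of 1] by simp
  then have "x < \<top>" using C by (rule le_less_trans)
  then obtain r where r: "x = ennreal r" "0 \<le> r" using ennreal_cases[of x] by auto
  obtain c where c: "C = ennreal c" "0 \<le> c" using C ennreal_cases[of C] by auto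
  have "real n * r \<le> c" for n :: nat
  proof -
    have "ennreal (real n * r) \<le> ennreal c" using le[of n] r c by (simp add: ennreal_mult ennreal_of_nat_eq_real_of_nat)
    then show ?thesis using c by (auto simp: ennreal_le_iff2)
  qed
  have "r = 0"
  proof (rule ccontr)
    assume "r \<noteq> 0"
    then have rp: "r > 0" using r by simp
    obtain n :: nat where "c / r < real n" using reals_Archimedean2 by blast
    then have "c < real n * r" using rp by (simp add: field_simps)
    then show False using \<open>real n * r \<le> c\<close> not_le by blast
  qed
  then show ?thesis using r by simp
qed

context ext begin

definition "dd = (\<Sum>i\<in>Basis. s i *\<^sub>R i)"
lemma dd_inner: "i \<in> Basis \<Longrightarrow> dd \<bullet> i = s i"
  by (simp add: dd_def inner_sum_left_Basis)

lemma orth_open: "open (orth s)"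
proof -
  have "orth s = (\<Inter>i\<in>Basis. {x. 0 < s i * (x \<bullet> i)})" by (auto simp: orth_def)
  moreover have "open {x. 0 < s i * (x \<bullet> i)}" for i :: 'a
    by (intro open_Collect_less continuous_intros)
  ultimately show ?thesis by auto
qed

definition "Fr = (K \<inter> orth s) - U"

lemma Fr_leb: "Fr \<in> sets lebesgue"
proof -
  have "orth s \<in> sets lebesgue" using orth_open by (intro sets_borel_leb) simp
  moreover have "U \<in> sets lebesgue" using U_open by (intro sets_borel_leb) simp
  ultimately show ?thesis unfolding Fr_def using Kl by auto
qed

lemma Fr_shift: assumes x: "x \<in> Fr" and e: "0 < e" shows "e *\<^sub>R dd + x \<notin> K"
proof
  assume xe: "e *\<^sub>R dd + x \<in> K"
  have xo: "x \<in> orth s" and xU: "x \<notin> U" using x by (auto simp: Fr_def)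
  have eo: "e *\<^sub>R dd + x \<in> orth s"
    unfolding orth_def
  proof safe
    fix i :: 'a assume i: "i \<in> Basis"
    have "s i * ((e *\<^sub>R dd + x) \<bullet> i) = e * (s i * s i) + s i * (x \<bullet> i)"
      using i by (simp add: inner_simps dd_inner algebra_simps)
    moreover have "s i * s i = 1" using s i by auto
    moreover have "0 < s i * (x \<bullet> i)" using xo i by (auto simp: orth_def)
    ultimately show "0 < s i * ((e *\<^sub>R dd + x) \<bullet> i)" using e by simp
  qed
  have "x \<in> RR (e *\<^sub>R dd + x)"
    unfolding RR_def mem_box
  proof (intro ballI conjI)
    fix i :: 'a assume i: "i \<in> Basis"
    have xi: "0 < s i * (x \<bullet> i)" using xo i by (auto simp: orth_def)
    have ei: "(e *\<^sub>R dd + x) \<bullet> i = e * s i + x \<bullet> i" using i by (simp add: inner_simps dd_inner)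
    show "lo (e *\<^sub>R dd + x) \<bullet> i < x \<bullet> i" "x \<bullet> i < hi (e *\<^sub>R dd + x) \<bullet> i"
      using s i xi e unfolding lo_inner[OF i] hi_inner[OF i] ei by (auto simp: zero_less_mult_iff)
  qed
  then have "x \<in> U" using xe eo unfolding U_def P0_def by blast
  then show False using xU by simp
qed

lemma Fr_disj:
  assumes ab: "0 \<le> a" "a < b"
  shows "((\<lambda>x. a *\<^sub>R dd + x) ` Fr) \<inter> ((\<lambda>x. b *\<^sub>R dd + x) ` Fr) = {}"
proof (safe)
  fix x y assume x: "x \<in> Fr" and y: "y \<in> Fr" and eq: "a *\<^sub>R dd + x = b *\<^sub>R dd + y"
  then have "x = (b - a) *\<^sub>R dd + y" by (simp add: algebra_simps)
  moreover have "(b - a) *\<^sub>R dd + y \<notin> K" using Fr_shift[OF y] ab by simp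
  moreover have "x \<in> K" using x by (simp add: Fr_def)
  ultimately show "a *\<^sub>R dd + x \<in> {}" by simp
qed

lemma translate_emeasure: "emeasure lebesgue ((\<lambda>x. v + x) ` S) = emeasure lebesgue S"
proof -
  have "(\<lambda>x. v + x) ` S = (\<lambda>x. 1 *\<^sub>R x + v) ` S" by (simp add: add.commute)
  then show ?thesis using emeasure_lebesgue_affine[of 1 v S] by simp
qed

lemma Fr_ball_null: "Fr \<inter> cball 0 R \<in> null_sets lebesgue"
proof -
  let ?G = "Fr \<inter> cball 0 R"
  have G: "?G \<in> sets lebesgue" using Fr_leb by auto
  define T where "T n k = (\<lambda>x. (real k / real n) *\<^sub>R dd + x) ` ?G" for n k :: nat
  let ?C = "cball (0::'a) (R + norm dd)"
  have "of_nat n * emeasure lebesgue ?G \<le> emeasure lebesgue ?C" for n :: nat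
  proof (cases "n = 0")
    case True then show ?thesis by simp
  next
    case False
    have Tm: "T n k \<in> sets lebesgue" for k unfolding T_def by (rule lebesgue_sets_translation[OF G])
    have Te: "emeasure lebesgue (T n k) = emeasure lebesgue ?G" for k
      unfolding T_def by (rule translate_emeasure)
    have TC: "T n k \<subseteq> ?C" if "k < n" for k
    proof
      fix z assume "z \<in> T n k"
      then obtain x where x: "x \<in> ?G" "z = (real k / real n) *\<^sub>R dd + x" unfolding T_def by auto
      have kn: "0 \<le> real k / real n" "real k / real n \<le> 1" using that by auto
      have "norm z = norm ((real k / real n) *\<^sub>R dd + x)" using x by simp
      also have "\<dots> \<le> norm ((real k / real n) *\<^sub>R dd) + norm x" by (rule norm_triangle_ineq)
      also have "norm ((real k / real n) *\<^sub>R dd) = (real k / real n) * norm dd" using kn by simp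
      also have "(real k / real n) * norm dd \<le> 1 * norm dd" using kn by (intro mult_right_mono) auto
      finally show "z \<in> ?C" using x by auto
    qed
    have disj: "disjoint_family_on (T n) {..<n}"
      unfolding disjoint_family_on_def
    proof (intro ballI impI)
      fix k k' assume k: "k \<in> {..<n}" "k' \<in> {..<n}" "k \<noteq> k'"
      have sub: "T n j \<subseteq> (\<lambda>x. (real j / real n) *\<^sub>R dd + x) ` Fr" for j unfolding T_def by auto
      show "T n k \<inter> T n k' = {}"
      proof (cases "k < k'")
        case True
        then have "real k / real n < real k' / real n" using False by (simp add: divide_strict_right_mono)
        then show ?thesis using Fr_disj[of "real k / real n" "real k' / real n"] sub[of k] sub[of k'] by auto
      next
        case False2: False
        then have "k' < k" using k by simp
        then have "real k' / real n < real k / real n" using False by (simp add: divide_strict_right_mono)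
        then show ?thesis using Fr_disj[of "real k' / real n" "real k / real n"] sub[of k] sub[of k'] by auto
      qed
    qed
    have "of_nat n * emeasure lebesgue ?G = (\<Sum>k<n. emeasure lebesgue (T n k))" using Te by simp
    also have "\<dots> = emeasure lebesgue (\<Union>k<n. T n k)"
      using Tm disj by (intro sum_emeasure) auto
    also have "\<dots> \<le> emeasure lebesgue ?C" using TC Tm by (intro emeasure_mono) auto
    finally show ?thesis .
  qed
  moreover have "emeasure lebesgue ?C < \<top>"
  proof -
    have "?C \<in> sets borel" by simp
    then have "emeasure lebesgue ?C = emeasure lborel ?C" by simp
    also have "\<dots> < \<top>"
      using emeasure_bounded_finite[of ?C] by (simp add: less_top)
    finally show ?thesis .
  qed
  ultimately have "emeasure lebesgue ?G = 0" by (rule ennreal_archi)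
  then show ?thesis using G by (simp add: null_sets_def)
qed

lemma Fr_null: "Fr \<in> null_sets lebesgue"
proof -
  have "Fr = (\<Union>R::nat. Fr \<inter> cball 0 (real R))"
  proof (safe)
    fix x assume "x \<in> Fr"
    obtain R :: nat where "norm x \<le> real R" using real_arch_simple by blast
    then show "x \<in> (\<Union>R::nat. Fr \<inter> cball 0 (real R))" using \<open>x \<in> Fr\<close> by auto
  qed
  moreover have "(\<Union>R::nat. Fr \<inter> cball 0 (real R)) \<in> null_sets lebesgue"
    using Fr_ball_null by (intro null_sets_UN) auto
  ultimately show ?thesis by simp
qed

lemma KU_null: "K - U \<in> null_sets lebesgue"
proof -
  have sub: "K - U \<subseteq> Fr \<union> (\<Union>i\<in>Basis. {x. x \<bullet> i = 0})"
  proof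
    fix x assume x: "x \<in> K - U"
    show "x \<in> Fr \<union> (\<Union>i\<in>Basis. {x. x \<bullet> i = 0})"
    proof (cases "x \<in> orth s")
      case True then show ?thesis using x by (auto simp: Fr_def)
    next
      case False
      then obtain i where i: "i \<in> Basis" "\<not> 0 < s i * (x \<bullet> i)" by (auto simp: orth_def)
      moreover have "0 \<le> s i * (x \<bullet> i)" using KQ x i by auto
      ultimately have "s i * (x \<bullet> i) = 0" by simp
      then have "x \<bullet> i = 0" using s i by auto
      then show ?thesis using i by auto
    qed
  qed
  have hyp: "(\<Union>i\<in>Basis. {x::'a. x \<bullet> i = 0}) \<in> null_sets lebesgue"
  proof (rule null_sets_UN')
    show "countable (Basis :: 'a set)" by (simp add: countable_finite)
    fix i :: 'a assume "i \<in> Basis"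
    then have "negligible {x::'a. x \<bullet> i = 0}" by (rule negligible_standard_hyperplane)
    then show "{x::'a. x \<bullet> i = 0} \<in> null_sets lebesgue" by (simp add: negligible_iff_null_sets)
  qed
  have N: "Fr \<union> (\<Union>i\<in>Basis. {x::'a. x \<bullet> i = 0}) \<in> null_sets lebesgue"
    using Fr_null hyp by (rule null_sets.Un)
  have m: "K - U \<in> sets lebesgue" using Kl U_open sets_borel_leb[of U] by auto
  have "emeasure lebesgue (K - U) \<le> emeasure lebesgue (Fr \<union> (\<Union>i\<in>Basis. {x::'a. x \<bullet> i = 0}))"
    using sub N by (intro emeasure_mono) auto
  then have "emeasure lebesgue (K - U) = 0" using N by auto
  then show ?thesis using m by auto
qed

end


context ext begin

lemma P0_ne: "P0 \<noteq> {}"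
proof
  assume "P0 = {}"
  then have "U = {}" by (simp add: U_def)
  then have "K \<in> null_sets lebesgue" using KU_null by simp
  then show False using Kpos by auto
qed

lemma U_meas: "measure lborel U = cK"
proof -
  have Ub: "U \<in> sets borel" using U_open by simp
  have "emeasure lebesgue (K - (K - U)) = emeasure lebesgue K"
    using KU_null Kl by (intro emeasure_Diff_null_set) auto
  moreover have "K - (K - U) = U" using U_K by auto
  ultimately have "emeasure lebesgue U = ennreal cK" using eK by simp
  moreover have "emeasure lebesgue U = emeasure lborel U" using Ub by simp
  ultimately have "emeasure lborel U = ennreal cK" by simp
  then show ?thesis using cK_pos by (intro measure_eq_emeasure_eq_ennreal) auto
qed

lemma U_formula_real:
  assumes p0: "p0 \<in> P0" and nu: "\<nu> = \<nu>1 \<or> \<nu> = \<nu>2" and X: "X \<in> sets borel"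
  shows "measure \<nu> (X \<inter> U) = alpha \<nu> p0 * measure lborel (X \<inter> U)"
proof -
  have a0: "0 \<le> alpha \<nu> p0" using alpha_prop[OF p0 nu] by blast
  have XU: "X \<inter> U \<in> sets borel" using X U_open by auto
  have fin: "emeasure lborel (X \<inter> U) = ennreal (measure lborel (X \<inter> U))"
  proof -
    have "emeasure lborel (X \<inter> U) \<le> emeasure lborel U" using XU U_open by (intro emeasure_mono) auto
    also have "emeasure lborel U = emeasure lebesgue U" using U_open by simp
    also have "\<dots> \<le> emeasure lebesgue K" using U_K Kl by (intro emeasure_mono) auto
    also have "\<dots> < \<infinity>" by (rule Kfin)
    finally show ?thesis by (intro emeasure_eq_ennreal_measure) simp
  qed
  have "emeasure \<nu> (X \<inter> U) = ennreal (alpha \<nu> p0 * measure lborel (X \<inter> U))"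
    using U_formula[OF p0 nu X] fin a0 by (simp add: ennreal_mult)
  then show ?thesis using a0 by (intro measure_eq_emeasure_eq_ennreal) auto
qed

lemma nu1_eq: "\<nu>1 = unif K"
proof -
  obtain p0 where p0: "p0 \<in> P0" using P0_ne by blast
  interpret P1: prob_space \<nu>1 by (rule p1(1))
  interpret P2: prob_space \<nu>2 by (rule p2(1))
  interpret M: prob_space "unif K" by (rule mu_prob)
  let ?a1 = "alpha \<nu>1 p0" and ?a2 = "alpha \<nu>2 p0"
  have Ub: "U \<in> sets borel" using U_open by simp
  have n1: "measure \<nu>1 U = ?a1 * cK" using U_formula_real[OF p0 _ Ub] U_meas by simp
  have n2: "measure \<nu>2 U = ?a2 * cK" using U_formula_real[OF p0 _ Ub] U_meas by simp
  have muU: "measure (unif K) U = 1"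
    using mu_real[OF Ub] U_K U_meas cK_pos Ub by (simp add: Int_absorb2)
  have eq: "1 = t * (?a1 * cK) + (1 - t) * (?a2 * cK)" using mix_real[OF Ub] muU n1 n2 by simp
  have le1: "?a1 * cK \<le> 1" using n1 P1.prob_le_1 by metis
  have le2: "?a2 * cK \<le> 1" using n2 P2.prob_le_1 by metis
  have "t * (?a1 * cK) \<ge> t"
  proof -
    have "(1 - t) * (?a2 * cK) \<le> (1 - t)" using le2 t by (simp add: mult_left_le)
    then show ?thesis using eq by linarith
  qed
  then have a1: "?a1 * cK = 1" using le1 t by (smt (verit, best) mult_le_cancel_left1)
  then have a1': "?a1 = 1 / cK" using cK_pos by (simp add: field_simps)
  have U1: "measure \<nu>1 U = 1" using n1 a1 by simp
  have agree: "measure \<nu>1 X = measure (unif K) X" if X: "X \<in> sets borel" for X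
  proof -
    have XU: "X \<inter> U \<in> sets borel" and XmU: "X - U \<in> sets borel" using X Ub by auto
    have "measure \<nu>1 (X \<inter> U) = measure lborel (X \<inter> U) / cK"
      using U_formula_real[OF p0 _ X] a1' by simp
    also have "\<dots> = measure (unif K) (X \<inter> U)"
    proof -
      have "X \<inter> U \<inter> K = X \<inter> U" using U_K by auto
      then show ?thesis using mu_real[OF XU] XU by simp
    qed
    finally have e1: "measure \<nu>1 (X \<inter> U) = measure (unif K) (X \<inter> U)" .
    have "measure \<nu>1 (X - U) \<le> measure \<nu>1 (UNIV - U)" using XmU Ub p1(2) by (intro P1.finite_measure_mono) auto
    also have "\<dots> = measure \<nu>1 UNIV - measure \<nu>1 U"
      using Ub p1(2) by (subst P1.finite_measure_Diff) (auto simp: sets_eq_imp_space_eq)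
    also have "\<dots> = 0" using U1 P1.prob_space p1(2) sets_eq_imp_space_eq[OF p1(2)] by simp
    finally have e2: "measure \<nu>1 (X - U) = 0" by (simp add: antisym)
    have "(X - U) \<inter> K \<in> null_sets lebesgue"
    proof -
      have "(X - U) \<inter> K \<subseteq> K - U" by auto
      moreover have "(X - U) \<inter> K \<in> sets lebesgue" using XmU Kl sets_borel_leb by auto
      ultimately show ?thesis using KU_null by (metis null_sets_subset)
    qed
    then have "measure lebesgue ((X - U) \<inter> K) = 0" by (simp add: measure_eq_0_null_sets)
    then have e3: "measure (unif K) (X - U) = 0" using mu_real[OF XmU] by simp
    have "measure \<nu>1 X = measure \<nu>1 (X \<inter> U) + measure \<nu>1 (X - U)"
      using XU XmU p1(2) by (subst P1.finite_measure_Union[symmetric]) (auto intro: arg_cong[where f="measure \<nu>1"])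
    moreover have "measure (unif K) X = measure (unif K) (X \<inter> U) + measure (unif K) (X - U)"
      using XU XmU by (subst M.finite_measure_Union[symmetric]) (auto intro: arg_cong[where f="measure (unif K)"])
    ultimately show ?thesis using e1 e2 e3 by simp
  qed
  show ?thesis
  proof (rule measure_eqI)
    show "sets \<nu>1 = sets (unif K)" using p1(2) by simp
    fix A assume "A \<in> sets \<nu>1"
    then have A: "A \<in> sets borel" using p1(2) by simp
    show "emeasure \<nu>1 A = emeasure (unif K) A"
      using agree[OF A] by (simp add: P1.emeasure_eq_measure M.emeasure_eq_measure)
  qed
qed

end


lemma unif_in_OU:
  fixes K :: "'a::euclidean_space set"
  assumes K: "OU_set 0 K" "K \<in> sets lebesgue" "0 < emeasure lebesgue K" "emeasure lebesgue K < \<infinity>"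
  shows "unif K \<in> OU_dists 0"
proof -
  have P: "prob_space (unif K)" using unif_prob K(2-4) by blast
  have mK: "unif K \<in> OUS" unfolding OUS_def using K by blast
  have eqm: "mixture 1 (\<lambda>_. 1) (\<lambda>_. unif K) = unif K"
  proof (rule measure_eqI)
    show "sets (mixture 1 (\<lambda>_. 1) (\<lambda>_. unif K)) = sets (unif K)" by simp
    fix A assume "A \<in> sets (mixture 1 (\<lambda>_. 1) (\<lambda>_. unif K))"
    then have A: "A \<in> sets borel" by simp
    show "emeasure (mixture 1 (\<lambda>_. 1) (\<lambda>_. unif K)) A = emeasure (unif K) A"
      using mixture_emeasure[of 1 "\<lambda>_. unif K" A "\<lambda>_. 1"] A by simp
  qed
  have hull: "unif K \<in> conv_hull_meas OUS"
    unfolding conv_hull_meas_def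
    by (rule CollectI, rule exI[of _ 1], rule exI[of _ "\<lambda>_. 1"], rule exI[of _ "\<lambda>_. unif K"])
       (use eqm mK in auto)
  show ?thesis
    unfolding OU_dists_eq weak_closure_def distr_on_def
    using P hull by (auto intro!: bexI[of _ "unif K"])
qed

theorem mainTheorem13:
  fixes Q K :: "'a::euclidean_space set"
  assumes "closed_orthant Q"
    and "K \<subseteq> Q"
    and "OU_set 0 K"
    and "K \<in> sets lebesgue"
    and "0 < emeasure lebesgue K" and "emeasure lebesgue K < \<infinity>"
  shows "extreme_meas (OU_dists 0) (unif K)"
proof -
  obtain s :: "'a \<Rightarrow> real" where s: "\<forall>i\<in>Basis. s i = 1 \<or> s i = -1"
    and Q: "Q = {x. \<forall>i\<in>Basis. 0 \<le> s i * (x \<bullet> i)}"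
    using assms(1) unfolding closed_orthant_def by blast
  have KQ: "\<forall>x\<in>K. \<forall>i\<in>Basis. 0 \<le> s i * (x \<bullet> i)" using assms(2) Q by blast
  have dist: "prob_space \<nu> \<and> sets \<nu> = sets borel \<and> PR s \<nu>" if "\<nu> \<in> OU_dists 0" for \<nu>
  proof -
    have "distr_on \<nu>" using that unfolding OU_dists_eq weak_closure_def by blast
    then show ?thesis using closure_PR[OF that] by (simp add: distr_on_def)
  qed
  show ?thesis
    unfolding extreme_meas_def
  proof (rule conjI)
    show "unif K \<in> OU_dists 0" using unif_in_OU assms(3-6) by blast
  next
    show "\<forall>\<nu>1 \<nu>2 t. \<nu>1 \<in> OU_dists 0 \<and> \<nu>2 \<in> OU_dists 0 \<and> 0 < t \<and> t < 1 \<and>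
      unif K = mixture 2 (\<lambda>j. if j = 0 then t else 1 - t) (\<lambda>j. if j = 0 then \<nu>1 else \<nu>2) \<longrightarrow>
      \<nu>1 = unif K \<and> \<nu>2 = unif K"
  proof (intro allI impI)
    fix \<nu>1 \<nu>2 t
    assume h: "\<nu>1 \<in> OU_dists 0 \<and> \<nu>2 \<in> OU_dists 0 \<and> 0 < t \<and> t < 1 \<and>
      unif K = mixture 2 (\<lambda>j. if j = 0 then t else 1 - t) (\<lambda>j. if j = 0 then \<nu>1 else \<nu>2)"
    have d1: "prob_space \<nu>1" "sets \<nu>1 = sets borel" "PR s \<nu>1" using dist h by auto
    have d2: "prob_space \<nu>2" "sets \<nu>2 = sets borel" "PR s \<nu>2" using dist h by auto
    have t: "0 < t" "t < 1" using h by auto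
    have mix: "\<forall>A\<in>sets borel. emeasure (unif K) A = ennreal t * emeasure \<nu>1 A + ennreal (1 - t) * emeasure \<nu>2 A"
    proof
      fix A :: "'a set" assume A: "A \<in> sets borel"
      have "emeasure (unif K) A = emeasure (mixture 2 (\<lambda>j. if j = 0 then t else 1 - t) (\<lambda>j. if j = 0 then \<nu>1 else \<nu>2)) A"
        using h by simp
      also have "\<dots> = (\<Sum>j<(2::nat). ennreal (if j = 0 then t else 1 - t) * emeasure (if j = 0 then \<nu>1 else \<nu>2) A)"
        using d1 d2 A by (intro mixture_emeasure) auto
      also have "\<dots> = ennreal t * emeasure \<nu>1 A + ennreal (1 - t) * emeasure \<nu>2 A"
        by (simp add: numeral_2_eq_2)
      finally show "emeasure (unif K) A = ennreal t * emeasure \<nu>1 A + ennreal (1 - t) * emeasure \<nu>2 A" .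
    qed
    have e1: "ext s K \<nu>1 \<nu>2 t"
      by (rule ext.intro) (use s KQ assms(3-6) d1 d2 t mix in auto)
    have e2: "ext s K \<nu>2 \<nu>1 (1 - t)"
      by (rule ext.intro) (use s KQ assms(3-6) d1 d2 t mix in \<open>auto simp: add.commute\<close>)
    show "\<nu>1 = unif K \<and> \<nu>2 = unif K"
      using ext.nu1_eq[OF e1] ext.nu1_eq[OF e2] by simp
  qed
  qed
qed


end
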